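(* Consider $N$ agents, agent $i\in\{1,\dots,N\}$ having state $x_i(k)\in\mathbb{R}^{n_i}$ with dynamics $x_i(k+1)=A_ix_i(k)+B_iu_i(k)+w_i(k)$, process noise $w_i(k)\sim\mathcal{N}(0,W_i)$, output $y_i(k)=C_ix_i(k)$ with $C_i\in\mathbb{R}^{q_i\times n_i}$, and a reference limit $\bar{x}_i\in\mathbb{R}^{n_i}$. Each agent $i$ chooses $\epsilon_i>0,\delta_i\in(0,1/2)$, $\bar\epsilon_i>0,\bar\delta_i\in(0,1/2)$, adjacency parameters $b_i>0$, $\beta_i>0$, and noise levels $\sigma_i\ge\kappa(\delta_i,\epsilon_i)s_1(C_i)b_i$ and $\bar\sigma_i\ge\kappa(\bar\delta_i,\bar\epsilon_i)\beta_i$. Consider the scheme (Algorithm 1) in which: agent $i$ sends a cloud computer the single value $\tilde{x}_i=\bar{x}_i+\bar{w}_i$, $\bar w_i\sim\mathcal{N}(0,\bar\sigma_i^2I)$; at every time $k$ agent $i$ sends the cloud $\tilde y_i(k)=C_ix_i(k)+v_i(k)$ with $v_i(k)\sim\mathcal{N}(0,\sigma_i^2 I)$ i.i.d. over time and independent of everything else; the cloud, using only these privatized values and public information (the matrices $A_i,B_i,C_i,W_i$, noise variances, privacy parameters, $\mathbb{E}[x_i(0)]$, and cost matrices $Q,R$), computes a Kalman filter state estimate $\hat x(k)$ and the control $u^*(k)=L\hat x(k)+Mg$ (with $L,M,g$ the infinite-horizon LQ tracking gains, $g$ computed from $\tilde x=(\tilde x_1^T,\dots,\tilde x_N^T)^T$)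 and sends $u_i^*(k)$ to agent $i$, which applies it. Then, for every $i$, Algorithm 1 provides $(\epsilon_i,\delta_i)$-differential privacy for agent $i$'s state trajectory $\{x_i(k)\}_{k\in\mathbb{N}}$ (with respect to $\mathrm{Adj}_{b_i}$) and $(\bar\epsilon_i,\bar\delta_i)$-differential privacy for $\bar{x}_i$ (with respect to $\mathrm{Adj}_{\beta_i}$).
   Context: $\mathcal{Q}(y)=\frac{1}{\sqrt{2\pi}}\int_y^\infty e^{-z^2/2}dz$, $K_\delta=\mathcal{Q}^{-1}(\delta)$, and $\kappa(\delta,\epsilon)=\frac{1}{2\epsilon}\big(K_\delta+\sqrt{K_\delta^2+2\epsilon}\big)$; $s_1(\cdot)$ is the largest singular value. Static adjacency: $\mathrm{Adj}_{\beta_i}(r,\bar r)=1$ iff $\|r-\bar r\|_2\le\beta_i$. A mechanism $M$ on $\mathbb{R}^{n_i}$ is $(\epsilon,\delta)$-differentially private if $\mathbb{P}[M(r)\in S]\le e^{\epsilon}\mathbb{P}[M(\bar r)\in S]+\delta$ for all adjacent $r,\bar r$ and all Borel $S$. Trajectory adjacency: for $x_i,x_i'\in\tilde\ell_2^{n_i}$ (sequences whose finite truncations have finite $\ell_2$-norm $\|Z\|_{\ell_2}=(\sum_k\|Z(k)\|_2^2)^{1/2}$), $\mathrm{Adj}_{b_i}(x_i,x_i')=1$ iff $\|x_i-x_i'\|_{\ell_2}\le b_i$. A mechanism $M$ mapping state trajectories to output trajectories is $(\epsilon,\delta)$-differentially private if $\mathbb{P}[M(x_i)\in S]\le e^{\epsilon}\mathbb{P}[M(x_i')\in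 S]+\delta$ for all adjacent $x_i,x_i'$ and all measurable sets $S$ of output trajectories. *)

theory Defs
  imports "HOL-Probability.Probability"
begin

definition Qfun :: "real \<Rightarrow> real" where
  "Qfun y = (1 / sqrt (2 * pi)) * (\<integral>z\<in>{y..}. exp (- (z\<^sup>2) / 2) \<partial>lborel)"

definition Kdelta :: "real \<Rightarrow> real" where
  "Kdelta \<delta> = (THE y. Qfun y = \<delta>)"

definition kappa :: "real \<Rightarrow> real \<Rightarrow> real" where
  "kappa \<delta> \<epsilon> = (1 / (2 * \<epsilon>)) * (Kdelta \<delta> + sqrt ((Kdelta \<delta>)\<^sup>2 + 2 * \<epsilon>))"

definition s1 :: "real^'n^'q \<Rightarrow> real" where
  "s1 C = sqrt (Max {e. \<exists>v. v \<noteq> 0 \<and> (transpose C ** C) *v v = e *\<^sub>R v})"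

definition gauss :: "real^'n \<Rightarrow> real \<Rightarrow> (real^'n) measure" where
  "gauss \<mu> \<sigma> = (if \<sigma> = 0 then return borel \<mu>
     else density lborel (\<lambda>y. \<Prod>j\<in>UNIV. normal_density (\<mu> $ j) \<sigma> (y $ j)))"

definition diff_private ::
  "('a \<Rightarrow> 'a \<Rightarrow> bool) \<Rightarrow> ('a \<Rightarrow> 'b measure) \<Rightarrow> real \<Rightarrow> real \<Rightarrow> bool" where
  "diff_private Adj M \<epsilon> \<delta> \<longleftrightarrow>
     (\<forall>x x'. Adj x x' \<longrightarrow>
        (\<forall>S \<in> sets (M x). measure (M x) S \<le> exp \<epsilon> * measure (M x') S + \<delta>))"

definition Adj_static :: "real \<Rightarrow> real^'n \<Rightarrow> real^'n \<Rightarrow> bool" where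
  "Adj_static \<beta> r r' \<longleftrightarrow> norm (r - r') \<le> \<beta>"

text \<open>Every sequence nat => R^n lies in the extended space tilde-l2 (finite truncations
  always have finite norm), so trajectories are arbitrary sequences.\<close>
definition Adj_traj :: "real \<Rightarrow> (nat \<Rightarrow> real^'n) \<Rightarrow> (nat \<Rightarrow> real^'n) \<Rightarrow> bool" where
  "Adj_traj b x x' \<longleftrightarrow>
     summable (\<lambda>k. (norm (x k - x' k))\<^sup>2) \<and> sqrt (\<Sum>k. (norm (x k - x' k))\<^sup>2) \<le> b"

definition traj_mech :: "real^'n^'q \<Rightarrow> real \<Rightarrow> (nat \<Rightarrow> real^'n) \<Rightarrow> (nat \<Rightarrow> real^'q) measure" where
  "traj_mech C \<sigma> x = PiM UNIV (\<lambda>k. gauss (C *v x k) \<sigma>)"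

definition ref_mech :: "real \<Rightarrow> real^'n \<Rightarrow> (real^'n) measure" where
  "ref_mech \<sigma> r = gauss r \<sigma>"

end

theory Submission
  imports Defs
begin

abbreviation "SN \<equiv> density lborel std_normal_density"

lemma SN_prob: "prob_space SN"
  using prob_space_normal_density by simp

lemma measure_SN: "A \<in> sets borel \<Longrightarrow> measure SN A = (\<integral>z\<in>A. std_normal_density z \<partial>lborel)"
proof -
  assume A: "A \<in> sets borel"
  have "measure SN A = enn2real (\<integral>\<^sup>+z. ennreal (std_normal_density z) * indicator A z \<partial>lborel)"
    using A by (simp add: measure_def emeasure_density)
  also have "\<dots> = enn2real (\<integral>\<^sup>+z. ennreal (indicator A z * std_normal_density z) \<partial>lborel)"
    by (intro arg_cong[where f=enn2real] nn_integral_cong) (auto split: split_indicator)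
  also have "\<dots> = (\<integral>z. indicator A z * std_normal_density z \<partial>lborel)"
    using A integrable_mult_indicator[of A lborel std_normal_density]
    by (subst nn_integral_eq_integral) auto
  finally show ?thesis by (simp add: set_lebesgue_integral_def)
qed

lemma Qfun_SN: "Qfun y = measure SN {y..}"
proof -
  have "Qfun y = (\<integral>z\<in>{y..}. (1 / sqrt (2 * pi)) * exp (- (z\<^sup>2) / 2) \<partial>lborel)"
    unfolding Qfun_def by (subst set_integral_mult_right) simp
  also have "\<dots> = measure SN {y..}"
    by (subst measure_SN) (measurable, rule set_lebesgue_integral_cong, simp, simp only: std_normal_density_def, simp)
  finally show ?thesis .
qed

interpretation SN: real_distribution SN
  by (simp add: real_distribution_def real_distribution_axioms_def SN_prob)

lemma SN_atom: "measure SN {x} = 0"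
  by (simp add: measure_def emeasure_density nn_integral_null_set)

lemma Qfun_cdf: "Qfun y = 1 - cdf SN y"
proof -
  have "measure SN {y..} = 1 - measure SN {..<y}"
    using SN.prob_compl[of "{..<y}"] by (simp add: Compl_eq_Diff_UNIV[symmetric] not_less atLeast_def lessThan_def Collect_neg_eq[symmetric] )
  also have "measure SN {..<y} = measure SN {..y}"
  proof -
    have "{..y} = {..<y} \<union> {y}" by auto
    then have "measure SN {..y} = measure SN {..<y} + measure SN {y}"
      using SN.finite_measure_Union[of "{..<y}" "{y}"] by auto
    then show ?thesis using SN_atom by simp
  qed
  finally show ?thesis by (simp add: Qfun_SN cdf_def)
qed

lemma Qfun_cont: "isCont Qfun x"
  unfolding Qfun_cdf[abs_def] using SN.isCont_cdf SN_atom by (intro continuous_intros) auto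

lemma Qfun_strict: "a < b \<Longrightarrow> Qfun b < Qfun a"
proof -
  assume ab: "a < b"
  have "cdf SN b - cdf SN a = measure SN {a<..b}"
    using SN.cdf_diff_eq ab by simp
  also have "\<dots> > 0"
  proof -
    define m where "m = (1 / sqrt (2 * pi)) * exp (- (a\<^sup>2 + b\<^sup>2) / 2)"
    have mpos: "m > 0" unfolding m_def by simp
    have lb: "m \<le> std_normal_density z" if "z \<in> {a<..b}" for z
    proof -
      have "z\<^sup>2 \<le> a\<^sup>2 + b\<^sup>2"
      proof (cases "z \<ge> 0")
        case True
        then have "z\<^sup>2 \<le> b\<^sup>2" using that by (intro power_mono) auto
        then show ?thesis by (smt (verit) zero_le_power2)
      next
        case False
        then have "(-z)\<^sup>2 \<le> (-a)\<^sup>2" using that by (intro power_mono) auto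
        then show ?thesis by (smt (verit) zero_le_power2 power2_minus)
      qed
      then show ?thesis unfolding m_def std_normal_density_def by (simp add: divide_right_mono)
    qed
    have "ennreal (m * (b - a)) = (\<integral>\<^sup>+z. ennreal m * indicator {a<..b} z \<partial>lborel)"
      using ab mpos by (simp add: nn_integral_cmult_indicator ennreal_mult)
    also have "\<dots> \<le> (\<integral>\<^sup>+z. ennreal (std_normal_density z) * indicator {a<..b} z \<partial>lborel)"
      using lb by (intro nn_integral_mono) (auto split: split_indicator)
    also have "\<dots> = emeasure SN {a<..b}"
      by (simp add: emeasure_density)
    also have "\<dots> = ennreal (measure SN {a<..b})"
      by (simp add: SN.emeasure_eq_measure)
    finally have "m * (b - a) \<le> measure SN {a<..b}"
      by (simp add: ennreal_le_iff)
    then show ?thesis using mpos ab by (smt (verit) mult_pos_pos)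
  qed
  finally show ?thesis by (simp add: Qfun_cdf)
qed

lemma Qfun_mono: "a \<le> b \<Longrightarrow> Qfun b \<le> Qfun a"
  using Qfun_strict[of a b] by (cases "a = b") auto

lemma Qfun_top: "(Qfun \<longlongrightarrow> 0) at_top"
  unfolding Qfun_cdf[abs_def] using SN.cdf_lim_at_top_prob by (auto intro!: tendsto_eq_intros)

lemma Qfun_bot: "(Qfun \<longlongrightarrow> 1) at_bot"
  unfolding Qfun_cdf[abs_def] using SN.cdf_lim_at_bot by (auto intro!: tendsto_eq_intros)

lemma Kdelta: assumes "0 < d" "d < 1" shows "Qfun (Kdelta d) = d"
proof -
  have "\<exists>y. Qfun y = d"
  proof -
    from order_tendstoD(2)[OF Qfun_top, of d] assms obtain b where b: "\<And>x. x \<ge> b \<Longrightarrow> Qfun x < d"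
      by (auto simp: eventually_at_top_linorder)
    from order_tendstoD(1)[OF Qfun_bot, of d] assms obtain a where a: "\<And>x. x \<le> a \<Longrightarrow> Qfun x > d"
      by (auto simp: eventually_at_bot_linorder)
    let ?a = "min a b"
    have "Qfun ?a \<ge> d" "Qfun b \<le> d" "?a \<le> b" using a[of ?a] b[of b] by auto
    then obtain y where "Qfun y = d"
      using IVT2'[of Qfun b d ?a] Qfun_cont by (metis continuous_at_imp_continuous_on)
    then show ?thesis ..
  qed
  then obtain y where y: "Qfun y = d" ..
  have "(THE y. Qfun y = d) = y"
    using y Qfun_strict by (intro the_equality) (auto, metis linorder_neqE_linordered_idom less_irrefl)
  then show ?thesis unfolding Kdelta_def using y by simp
qed



lemma kappa_props:
  assumes e: "\<epsilon> > 0"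
  shows "kappa d \<epsilon> > 0" "\<epsilon> * kappa d \<epsilon> - 1 / (2 * kappa d \<epsilon>) = Kdelta d"
proof -
  define K where "K = Kdelta d"
  define r where "r = sqrt (K\<^sup>2 + 2 * \<epsilon>)"
  have r2: "r\<^sup>2 = K\<^sup>2 + 2 * \<epsilon>" unfolding r_def using e by simp
  have "sqrt (K\<^sup>2) < sqrt (K\<^sup>2 + 2 * \<epsilon>)" using e by (intro real_sqrt_less_mono) simp
  then have rK: "r > \<bar>K\<bar>" unfolding r_def by simp
  have k: "kappa d \<epsilon> = (K + r) / (2 * \<epsilon>)" unfolding kappa_def K_def r_def by simp
  have Kr: "K + r > 0" using rK by linarith
  show "kappa d \<epsilon> > 0" using k Kr e by simp
  have "(r - K) * (K + r) = 2 * \<epsilon>" using r2 by (simp add: algebra_simps power2_eq_square)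
  then have rk: "\<epsilon> / (K + r) = (r - K) / 2" using Kr by (simp add: field_simps)
  have "1 / (2 * kappa d \<epsilon>) = \<epsilon> / (K + r)" unfolding k using Kr e by (simp add: field_simps)
  with rk have "1 / (2 * kappa d \<epsilon>) = (r - K) / 2" by simp
  moreover have "\<epsilon> * kappa d \<epsilon> = (K + r) / 2" using k e by simp
  ultimately show "\<epsilon> * kappa d \<epsilon> - 1 / (2 * kappa d \<epsilon>) = Kdelta d" by (simp add: K_def field_simps)
qed

lemma kappa_bound:
  assumes e: "\<epsilon> > 0" and s: "0 < s" "s \<le> 1 / kappa d \<epsilon>"
  shows "Kdelta d \<le> \<epsilon> / s - s / 2"
proof -
  note kp = kappa_props[OF e, of d]
  define k where "k = kappa d \<epsilon>"
  have k0: "k > 0" using kp k_def by simp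
  have "1 / k \<ge> s" using s k_def by simp
  then have ks: "k \<le> 1 / s" using k0 s by (simp add: field_simps)
  have "\<epsilon> * k \<le> \<epsilon> / s" using ks e by (simp add: mult_left_mono divide_inverse)
  moreover have "s / 2 \<le> 1 / (2 * k)" using \<open>1/k \<ge> s\<close> by simp
  ultimately show ?thesis using kp(2)[folded k_def] by linarith
qed

lemma tail_normal:
  assumes P: "prob_space P" and D: "distributed P lborel L (normal_density \<eta> s)" and s: "s > 0"
  shows "measure P {x\<in>space P. L x \<ge> c} = Qfun ((c - \<eta>) / s)"
proof -
  interpret prob_space P by fact
  have Z: "distributed P lborel (\<lambda>x. (L x - \<eta>) / s) std_normal_density"
    using D normal_standard_normal_convert[OF s] by simp
  have "{x\<in>space P. L x \<ge> c} = (\<lambda>x. (L x - \<eta>) / s) -` {(c - \<eta>) / s..} \<inter> space P"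
    using s by (auto simp: divide_le_cancel le_diff_eq)
  then have "measure P {x\<in>space P. L x \<ge> c} = measure (distr P lborel (\<lambda>x. (L x - \<eta>) / s)) {(c - \<eta>) / s..}"
    using Z by (subst measure_distr) (auto dest: distributed_measurable)
  also have "\<dots> = measure SN {(c - \<eta>) / s..}"
    using Z by (simp add: distributed_def)
  finally show ?thesis by (simp add: Qfun_SN)
qed

lemma dp_from_tail:
  fixes f g :: "'a \<Rightarrow> real"
  assumes fm[measurable]: "f \<in> borel_measurable N" and gm[measurable]: "g \<in> borel_measurable N"
    and fp: "\<And>x. x \<in> space N \<Longrightarrow> f x > 0" and gp: "\<And>x. x \<in> space N \<Longrightarrow> g x > 0"
    and P: "prob_space (density N f)" and P': "prob_space (density N g)"
    and tail: "measure (density N f) {x\<in>space N. ln (f x / g x) > \<epsilon>} \<le> \<delta>"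
    and S: "S \<in> sets N"
  shows "measure (density N f) S \<le> exp \<epsilon> * measure (density N g) S + \<delta>"
proof -
  interpret P: prob_space "density N f" by fact
  interpret P': prob_space "density N g" by fact
  define A where "A = {x\<in>space N. f x \<le> exp \<epsilon> * g x}"
  have A[measurable]: "A \<in> sets N" unfolding A_def by measurable
  have B: "{x\<in>space N. ln (f x / g x) > \<epsilon>} = space N - A"
  proof -
    have "\<epsilon> < ln (f x / g x) \<longleftrightarrow> \<not> f x \<le> exp \<epsilon> * g x" if x: "x \<in> space N" for x
    proof -
      have fg: "f x / g x > 0" using fp[OF x] gp[OF x] by simp
      have "\<epsilon> < ln (f x / g x) \<longleftrightarrow> exp \<epsilon> < f x / g x"
        using fg by (metis exp_less_cancel_iff exp_ln)
      also have "\<dots> \<longleftrightarrow> exp \<epsilon> * g x < f x" using gp[OF x] by (simp add: pos_less_divide_eq)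
      finally show ?thesis by linarith
    qed
    then show ?thesis unfolding A_def by blast
  qed
  have "measure (density N f) S = measure (density N f) (S \<inter> A) + measure (density N f) (S - A)"
    using S A by (subst P.finite_measure_Union[symmetric]) (auto intro!: arg_cong[where f="measure _"])
  moreover have "measure (density N f) (S - A) \<le> \<delta>"
  proof -
    have "measure (density N f) (S - A) \<le> measure (density N f) (space N - A)"
      using S sets.sets_into_space[OF S] by (intro P.finite_measure_mono) auto
    then show ?thesis using tail B by simp
  qed
  moreover have "measure (density N f) (S \<inter> A) \<le> exp \<epsilon> * measure (density N g) S"
  proof -
    have "emeasure (density N f) (S \<inter> A) = (\<integral>\<^sup>+x. ennreal (f x) * indicator (S \<inter> A) x \<partial>N)"
      using S A by (simp add: emeasure_density)
    also have "\<dots> \<le> (\<integral>\<^sup>+x. ennreal (exp \<epsilon>) * (ennreal (g x) * indicator S x) \<partial>N)"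
      using gp by (intro nn_integral_mono) (auto simp: A_def ennreal_mult'[symmetric] split: split_indicator intro!: ennreal_leI)
    also have "\<dots> = ennreal (exp \<epsilon>) * emeasure (density N g) S"
      using S by (simp add: emeasure_density nn_integral_cmult)
    finally show ?thesis
      by (simp add: P.emeasure_eq_measure P'.emeasure_eq_measure ennreal_mult[symmetric] ennreal_le_iff)
  qed
  ultimately show ?thesis by linarith
qed



definition gpair :: "'a measure \<Rightarrow> ('a \<Rightarrow> real) \<Rightarrow> ('a \<Rightarrow> real) \<Rightarrow> real \<Rightarrow> bool" where
  "gpair N f g \<eta> \<longleftrightarrow> f \<in> borel_measurable N \<and> g \<in> borel_measurable N \<and>
     (\<forall>x\<in>space N. f x > 0 \<and> g x > 0) \<and> prob_space (density N f) \<and> prob_space (density N g) \<and>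
     \<eta> \<ge> 0 \<and> (\<eta> = 0 \<longrightarrow> (\<forall>x\<in>space N. f x = g x)) \<and>
     (\<eta> > 0 \<longrightarrow> distributed (density N f) lborel (\<lambda>x. ln (f x / g x)) (normal_density \<eta> (sqrt (2 * \<eta>))))"

lemma gpair_dp:
  assumes gp: "gpair N f g \<eta>" and e: "\<epsilon> > 0" and d: "0 < \<delta>" "\<delta> < 1"
    and eta: "sqrt (2 * \<eta>) \<le> 1 / kappa \<delta> \<epsilon>" and S: "S \<in> sets N"
  shows "measure (density N f) S \<le> exp \<epsilon> * measure (density N g) S + \<delta>"
proof -
  note G = gp[unfolded gpair_def]
  note [measurable] = G[THEN conjunct1] G[THEN conjunct2, THEN conjunct1]
  show ?thesis
  proof (cases "\<eta> = 0")
    case True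
    then have "density N f = density N g" using G by (intro density_cong) (auto simp: AE_measure)
    moreover have "measure (density N g) S \<le> exp \<epsilon> * measure (density N g) S"
      using e by (simp add: mult_le_cancel_right1)
    ultimately show ?thesis using d by simp
  next
    case False
    then have ep: "\<eta> > 0" using G by simp
    define s where "s = sqrt (2 * \<eta>)"
    have s0: "s > 0" using ep s_def by simp
    have eta_s: "\<eta> = s\<^sup>2 / 2" using ep s_def by simp
    interpret P: prob_space "density N f" using G by simp
    have D: "distributed (density N f) lborel (\<lambda>x. ln (f x / g x)) (normal_density \<eta> s)"
      using G ep s_def by simp
    have "measure (density N f) {x\<in>space N. ln (f x / g x) > \<epsilon>}
        \<le> measure (density N f) {x\<in>space (density N f). ln (f x / g x) \<ge> \<epsilon>}"
      by (intro P.finite_measure_mono) auto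
    also have "\<dots> = Qfun ((\<epsilon> - \<eta>) / s)"
      using tail_normal[OF _ D s0] G by simp
    also have "\<dots> \<le> Qfun (Kdelta \<delta>)"
    proof (rule Qfun_mono)
      have "(\<epsilon> - \<eta>) / s = \<epsilon> / s - s / 2" using s0 eta_s by (simp add: field_simps power2_eq_square)
      then show "Kdelta \<delta> \<le> (\<epsilon> - \<eta>) / s" using kappa_bound[OF e s0, of \<delta>] eta s_def by simp
    qed
    also have "\<dots> = \<delta>" using Kdelta d by simp
    finally show ?thesis
      using dp_from_tail[of f N g \<epsilon> \<delta> S] G S by auto
  qed
qed

lemma gpair_normal:
  assumes s: "\<sigma> > 0"
  shows "gpair lborel (normal_density a \<sigma>) (normal_density a' \<sigma>) ((a - a')\<^sup>2 / (2 * \<sigma>\<^sup>2))"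
proof -
  define \<alpha> where "\<alpha> = (a - a') / \<sigma>\<^sup>2"
  define \<beta> where "\<beta> = (a'\<^sup>2 - a\<^sup>2) / (2 * \<sigma>\<^sup>2)"
  have L: "ln (normal_density a \<sigma> y / normal_density a' \<sigma> y) = \<beta> + \<alpha> * y" for y
    using s by (simp add: normal_density_def \<alpha>_def \<beta>_def exp_diff[symmetric] field_simps power2_eq_square)
  have "a = a' \<Longrightarrow> (a - a')\<^sup>2 / (2 * \<sigma>\<^sup>2) = 0" by simp
  moreover have "(a - a')\<^sup>2 / (2 * \<sigma>\<^sup>2) \<ge> 0" by simp
  moreover have "distributed (density lborel (normal_density a \<sigma>)) lborel
      (\<lambda>x. ln (normal_density a \<sigma> x / normal_density a' \<sigma> x))
      (normal_density ((a - a')\<^sup>2 / (2 * \<sigma>\<^sup>2)) (sqrt (2 * ((a - a')\<^sup>2 / (2 * \<sigma>\<^sup>2)))))"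
    if pos: "(a - a')\<^sup>2 / (2 * \<sigma>\<^sup>2) > 0"
  proof -
    interpret prob_space "density lborel (normal_density a \<sigma>)"
      using prob_space_normal_density s by simp
    have X: "distributed (density lborel (normal_density a \<sigma>)) lborel (\<lambda>x. x) (normal_density a \<sigma>)"
      by (simp add: distributed_def distr_id2)
    have an: "\<alpha> \<noteq> 0" using pos s by (auto simp: \<alpha>_def)
    have "distributed (density lborel (normal_density a \<sigma>)) lborel (\<lambda>x. \<beta> + \<alpha> * x)
        (normal_density (\<beta> + \<alpha> * a) (\<bar>\<alpha>\<bar> * \<sigma>))"
      by (rule normal_density_affine[OF X s an])
    moreover have "\<beta> + \<alpha> * a = (a - a')\<^sup>2 / (2 * \<sigma>\<^sup>2)"
      using s by (simp add: \<alpha>_def \<beta>_def field_simps power2_eq_square)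
    moreover have "\<bar>\<alpha>\<bar> * \<sigma> = sqrt (2 * ((a - a')\<^sup>2 / (2 * \<sigma>\<^sup>2)))"
      using s by (simp add: \<alpha>_def real_sqrt_divide abs_div power2_eq_square real_sqrt_mult)
    ultimately show ?thesis unfolding L by simp
  qed
  ultimately show ?thesis unfolding gpair_def
    using s prob_space_normal_density by (auto simp: normal_density_pos)
qed



lemma PiM_density:
  fixes f :: "'i \<Rightarrow> 'a \<Rightarrow> real"
  assumes N: "product_sigma_finite N" and fin: "finite I"
    and fm[measurable]: "\<And>i. f i \<in> borel_measurable (N i)"
    and fp: "\<And>i x. x \<in> space (N i) \<Longrightarrow> f i x \<ge> 0"
    and pr: "\<And>i. prob_space (density (N i) (f i))"
  shows "PiM I (\<lambda>i. density (N i) (f i)) = density (PiM I N) (\<lambda>x. \<Prod>i\<in>I. f i (x i))"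
proof -
  interpret N: product_sigma_finite N by fact
  interpret D: product_sigma_finite "\<lambda>i. density (N i) (f i)"
    unfolding product_sigma_finite_def using pr by (auto intro: prob_space_imp_sigma_finite)
  show ?thesis
  proof (rule D.PiM_eqI[symmetric, OF fin])
    show "sets (density (PiM I N) (\<lambda>x. \<Prod>i\<in>I. f i (x i))) = sets (PiM I (\<lambda>i. density (N i) (f i)))"
      unfolding sets_density by (rule sets_PiM_cong) auto
    fix A assume A: "\<And>i. i \<in> I \<Longrightarrow> A i \<in> sets (density (N i) (f i))"
    then have A': "\<And>i. i \<in> I \<Longrightarrow> A i \<in> sets (N i)" by simp
    have "emeasure (density (PiM I N) (\<lambda>x. \<Prod>i\<in>I. f i (x i))) (Pi\<^sub>E I A)
      = (\<integral>\<^sup>+x. ennreal (\<Prod>i\<in>I. f i (x i)) * indicator (Pi\<^sub>E I A) x \<partial>PiM I N)"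
      using A' by (intro emeasure_density) (auto intro!: sets_PiM_I_finite fin)
    also have "\<dots> = (\<integral>\<^sup>+x. (\<Prod>i\<in>I. ennreal (f i (x i)) * indicator (A i) (x i)) \<partial>PiM I N)"
    proof (intro nn_integral_cong)
      fix x assume x: "x \<in> space (PiM I N)"
      then have xs: "\<And>i. i \<in> I \<Longrightarrow> x i \<in> space (N i)" by (auto simp: space_PiM)
      have "indicator (Pi\<^sub>E I A) x = (\<Prod>i\<in>I. indicator (A i) (x i) :: ennreal)"
        using x fin by (auto simp: space_PiM indicator_def PiE_iff prod_ennreal)
      moreover have "ennreal (\<Prod>i\<in>I. f i (x i)) = (\<Prod>i\<in>I. ennreal (f i (x i)))"
        using xs fp by (simp add: prod_ennreal)
      ultimately show "ennreal (\<Prod>i\<in>I. f i (x i)) * indicator (Pi\<^sub>E I A) x =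
          (\<Prod>i\<in>I. ennreal (f i (x i)) * indicator (A i) (x i))"
        by (simp add: prod.distrib)
    qed
    also have "\<dots> = (\<Prod>i\<in>I. \<integral>\<^sup>+y. ennreal (f i y) * indicator (A i) y \<partial>N i)"
      using A' by (intro N.product_nn_integral_prod fin) auto
    also have "\<dots> = (\<Prod>i\<in>I. emeasure (density (N i) (f i)) (A i))"
      using A' by (intro prod.cong refl) (simp add: emeasure_density)
    finally show "emeasure (density (PiM I N) (\<lambda>x. \<Prod>i\<in>I. f i (x i))) (Pi\<^sub>E I A) =
        (\<Prod>i\<in>I. emeasure (density (N i) (f i)) (A i))" .
  qed
qed

lemma distributed_cong_rv:
  assumes "\<And>x. x \<in> space M \<Longrightarrow> X x = Y x" and "distributed M N X f"
  shows "distributed M N Y f"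
  using assms distr_cong[OF refl refl, of M X Y N] measurable_cong[of M X Y N]
  unfolding distributed_def by auto

lemma gpair_prod:
  fixes f g :: "'i \<Rightarrow> 'a \<Rightarrow> real"
  assumes N: "product_sigma_finite N" and fin: "finite I"
    and gp: "\<And>i. gpair (N i) (f i) (g i) (\<eta> i)"
  shows "gpair (PiM I N) (\<lambda>x. \<Prod>i\<in>I. f i (x i)) (\<lambda>x. \<Prod>i\<in>I. g i (x i)) (\<Sum>i\<in>I. \<eta> i)"
proof -
  note G = gp[unfolded gpair_def]
  have fm[measurable]: "\<And>i. f i \<in> borel_measurable (N i)" and gm[measurable]: "\<And>i. g i \<in> borel_measurable (N i)"
    using G by auto
  have fp: "\<And>i x. x \<in> space (N i) \<Longrightarrow> f i x > 0" and gpos: "\<And>i x. x \<in> space (N i) \<Longrightarrow> g i x > 0"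
    using G by auto
  have eta0: "\<And>i. \<eta> i \<ge> 0" using G by auto
  have Fm: "(\<lambda>x. \<Prod>i\<in>I. f i (x i)) \<in> borel_measurable (PiM I N)" by measurable
  have Gm: "(\<lambda>x. \<Prod>i\<in>I. g i (x i)) \<in> borel_measurable (PiM I N)" by measurable
  have xs: "\<And>x i. x \<in> space (PiM I N) \<Longrightarrow> i \<in> I \<Longrightarrow> x i \<in> space (N i)"
    by (auto simp: space_PiM)
  have Fp: "\<forall>x\<in>space (PiM I N). (\<Prod>i\<in>I. f i (x i)) > 0 \<and> (\<Prod>i\<in>I. g i (x i)) > 0"
    using fp gpos xs by (auto intro!: prod_pos)
  define Q where "Q i = density (N i) (f i)" for i
  have Qp: "\<And>i. prob_space (Q i)" using G Q_def by auto
  have MF: "PiM I Q = density (PiM I N) (\<lambda>x. \<Prod>i\<in>I. f i (x i))"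
    unfolding Q_def using N fin fm fp G by (intro PiM_density) (auto simp: less_imp_le)
  have MG: "PiM I (\<lambda>i. density (N i) (g i)) = density (PiM I N) (\<lambda>x. \<Prod>i\<in>I. g i (x i))"
    using N fin gm gpos G by (intro PiM_density) (auto simp: less_imp_le)
  have P1: "prob_space (density (PiM I N) (\<lambda>x. \<Prod>i\<in>I. f i (x i)))"
    unfolding MF[symmetric] using Qp by (intro prob_space_PiM) auto
  have P2: "prob_space (density (PiM I N) (\<lambda>x. \<Prod>i\<in>I. g i (x i)))"
    unfolding MG[symmetric] using G by (intro prob_space_PiM) auto
  have z: "\<forall>x\<in>space (PiM I N). (\<Prod>i\<in>I. f i (x i)) = (\<Prod>i\<in>I. g i (x i))"
    if "(\<Sum>i\<in>I. \<eta> i) = 0"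
  proof -
    have "\<forall>i\<in>I. \<eta> i = 0" using that sum_nonneg_eq_0_iff[OF fin] eta0 by blast
    then show ?thesis using G xs by (auto intro!: prod.cong)
  qed
  have D: "distributed (density (PiM I N) (\<lambda>x. \<Prod>i\<in>I. f i (x i))) lborel
      (\<lambda>x. ln ((\<Prod>i\<in>I. f i (x i)) / (\<Prod>i\<in>I. g i (x i))))
      (normal_density (\<Sum>i\<in>I. \<eta> i) (sqrt (2 * (\<Sum>i\<in>I. \<eta> i))))"
    if pos: "(\<Sum>i\<in>I. \<eta> i) > 0"
  proof -
    define Ip where "Ip = {i\<in>I. \<eta> i > 0}"
    have Ipne: "Ip \<noteq> {}" using pos unfolding Ip_def
      by (metis (mono_tags, lifting) empty_Collect_eq eta0 order_less_le sum_nonneg_eq_0_iff fin)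
    have Ipfin: "finite Ip" using fin Ip_def by simp
    have Ine: "I \<noteq> {}" using Ipne Ip_def by auto
    define M where "M = PiM I Q"
    interpret prob_space M unfolding M_def using Qp by (intro prob_space_PiM) auto
    have sM: "space M = space (PiM I N)" unfolding M_def Q_def by (intro sets_eq_imp_space_eq sets_PiM_cong) auto
    have comp[measurable]: "(\<lambda>x. x i) \<in> measurable M (Q i)" if "i \<in> I" for i
      unfolding M_def using that by measurable
    have distrc: "distr M (Q i) (\<lambda>x. x i) = Q i" if "i \<in> I" for i
      unfolding M_def using Qp that by (intro distr_PiM_component) auto
    have ind0: "indep_vars Q (\<lambda>i x. x i) I"
    proof (subst indep_vars_iff_distr_eq_PiM'[OF Ine])
      show "random_variable (Q i) (\<lambda>x. x i)" if "i \<in> I" for i using that by simp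
      have "distr M (PiM I Q) (\<lambda>x. \<lambda>i\<in>I. x i) = distr M M (\<lambda>x. x)"
        unfolding M_def by (intro distr_cong) (auto simp: space_PiM)
      also have "\<dots> = PiM I Q" unfolding M_def by simp
      also have "\<dots> = PiM I (\<lambda>i. distr M (Q i) (\<lambda>x. x i))"
        by (intro PiM_cong) (auto simp: distrc)
      finally show "distr M (PiM I Q) (\<lambda>x. \<lambda>i\<in>I. x i) = PiM I (\<lambda>i. distr M (Q i) (\<lambda>x. x i))" .
    qed
    define L where "L i y = ln (f i y / g i y)" for i y
    have Lm[measurable]: "L i \<in> borel_measurable (Q i)" for i unfolding L_def Q_def by simp
    have ind: "indep_vars (\<lambda>_. borel) (\<lambda>i x. L i (x i)) Ip"
      using indep_vars_compose2[OF ind0, of L "\<lambda>_. borel"] Lm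
      by (rule_tac indep_vars_subset[of _ _ I]) (auto simp: Ip_def)
    have dist: "distributed M lborel (\<lambda>x. L i (x i)) (normal_density (\<eta> i) (sqrt (2 * \<eta> i)))"
      if i: "i \<in> Ip" for i
    proof -
      have iI: "i \<in> I" using i Ip_def by auto
      have Li: "distributed (Q i) lborel (L i) (normal_density (\<eta> i) (sqrt (2 * \<eta> i)))"
        using G i Ip_def unfolding L_def Q_def by auto
      have "distr M lborel (\<lambda>x. L i (x i)) = distr (distr M (Q i) (\<lambda>x. x i)) lborel (L i)"
        using iI by (subst distr_distr) (auto simp: comp_def)
      also have "\<dots> = distr (Q i) lborel (L i)" using distrc iI by simp
      finally show ?thesis using Li iI unfolding distributed_def by auto
    qed
    have S: "distributed M lborel (\<lambda>x. \<Sum>i\<in>Ip. L i (x i))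
        (normal_density (\<Sum>i\<in>Ip. \<eta> i) (sqrt (\<Sum>i\<in>Ip. (sqrt (2 * \<eta> i))\<^sup>2)))"
      using Ip_def by (intro sum_indep_normal Ipfin Ipne ind dist) auto
    have s1: "(\<Sum>i\<in>Ip. \<eta> i) = (\<Sum>i\<in>I. \<eta> i)"
      using fin eta0 unfolding Ip_def by (intro sum.mono_neutral_left) (auto simp: order_less_le)
    have s2: "(\<Sum>i\<in>Ip. (sqrt (2 * \<eta> i))\<^sup>2) = 2 * (\<Sum>i\<in>I. \<eta> i)"
      using eta0 s1 by (simp add: sum_distrib_left[symmetric])
    have eqf: "ln ((\<Prod>i\<in>I. f i (x i)) / (\<Prod>i\<in>I. g i (x i))) = (\<Sum>i\<in>Ip. L i (x i))"
      if x: "x \<in> space M" for x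
    proof -
      have xi: "\<And>i. i \<in> I \<Longrightarrow> x i \<in> space (N i)" using x sM xs by auto
      have "ln ((\<Prod>i\<in>I. f i (x i)) / (\<Prod>i\<in>I. g i (x i))) = ln (\<Prod>i\<in>I. f i (x i) / g i (x i))"
        by (simp add: prod_dividef)
      also have "\<dots> = (\<Sum>i\<in>I. L i (x i))"
      proof -
        have nz: "\<And>i. i \<in> I \<Longrightarrow> f i (x i) / g i (x i) \<noteq> 0"
          using xi fp gpos by (metis divide_pos_pos less_irrefl)
        show ?thesis unfolding L_def by (rule ln_prod[OF fin nz])
      qed
      also have "\<dots> = (\<Sum>i\<in>Ip. L i (x i))"
      proof (rule sum.mono_neutral_right[OF fin])
        show "Ip \<subseteq> I" using Ip_def by auto
        show "\<forall>i\<in>I - Ip. L i (x i) = 0"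
        proof
          fix i assume "i \<in> I - Ip"
          then have "\<eta> i = 0" "i \<in> I" using eta0 Ip_def by (auto simp: order_less_le)
          then show "L i (x i) = 0" using G xi fp unfolding L_def by (metis div_self less_irrefl ln_one)
        qed
      qed
      finally show ?thesis .
    qed
    have "distributed M lborel (\<lambda>x. ln ((\<Prod>i\<in>I. f i (x i)) / (\<Prod>i\<in>I. g i (x i))))
      (normal_density (\<Sum>i\<in>I. \<eta> i) (sqrt (2 * (\<Sum>i\<in>I. \<eta> i))))"
      using S s1 s2 by (intro distributed_cong_rv[OF eqf[symmetric]]) auto
    then show ?thesis unfolding M_def MF .
  qed
  show ?thesis unfolding gpair_def
    using Fm Gm Fp P1 P2 z D eta0 by (auto intro: sum_nonneg)
qed



lemma vec_measurable[measurable]: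
  "(\<lambda>f. \<chi> j. f j) \<in> measurable (PiM UNIV (\<lambda>_::'n::finite. lborel)) (borel :: (real^'n) measure)"
proof (subst borel_measurable_euclidean_space, intro ballI)
  fix b :: "real^'n" assume "b \<in> Basis"
  then obtain j where b: "b = axis j 1" using axis_inverse by blast
  show "(\<lambda>f. (\<chi> j. f j) \<bullet> b) \<in> borel_measurable (PiM UNIV (\<lambda>_::'n. lborel))"
    unfolding b inner_axis by simp
qed

lemma Basis_cart: "(Basis :: (real^'n) set) = range (\<lambda>j. axis j 1)"
  by (auto simp: Basis_vec_def)

lemma ps_lborel: "product_sigma_finite (\<lambda>_::'i. lborel :: real measure)"
  by (simp add: product_sigma_finite_def lborel.sigma_finite_measure_axioms)

lemma lborel_cart:
  "(lborel :: (real^'n::finite) measure) = distr (PiM UNIV (\<lambda>_::'n. lborel)) borel (\<lambda>f. \<chi> j. f j)"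
proof (rule lborel_eqI)
  fix l u :: "real^'n" assume le: "\<And>b. b \<in> Basis \<Longrightarrow> l \<bullet> b \<le> u \<bullet> b"
  then have le': "\<And>j. l $ j \<le> u $ j" using cart_eq_inner_axis by (metis axis_in_Basis_iff Basis_real_def insertI1)
  have pre: "(\<lambda>f. \<chi> j. f j) -` box l u \<inter> space (PiM UNIV (\<lambda>_::'n. lborel)) = Pi\<^sub>E UNIV (\<lambda>j. {l $ j <..< u $ j})"
    by (auto simp: space_PiM mem_box_cart PiE_iff)
  have "emeasure (distr (PiM UNIV (\<lambda>_::'n. lborel)) borel (\<lambda>f. \<chi> j. f j)) (box l u)
      = emeasure (PiM UNIV (\<lambda>_::'n. lborel)) (Pi\<^sub>E UNIV (\<lambda>j. {l $ j <..< u $ j}))"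
    by (subst emeasure_distr) (auto simp: pre)
  also have "\<dots> = (\<Prod>j\<in>UNIV. emeasure lborel {l $ j <..< u $ j})"
    by (subst product_sigma_finite.emeasure_PiM[OF ps_lborel]) auto
  also have "\<dots> = (\<Prod>j\<in>UNIV. ennreal (u $ j - l $ j))"
    using le' by simp
  also have "\<dots> = ennreal (\<Prod>j\<in>UNIV. u $ j - l $ j)"
    using le' by (simp add: prod_ennreal)
  also have "(\<Prod>j\<in>UNIV. u $ j - l $ j) = (\<Prod>b\<in>Basis. (u - l) \<bullet> b)"
  proof -
    have "inj (\<lambda>j::'n. axis j (1::real))" by (auto simp: inj_on_def axis_eq_axis)
    then show ?thesis unfolding Basis_cart by (subst prod.reindex) (auto simp: inner_axis)
  qed
  finally show "emeasure (distr (PiM UNIV (\<lambda>_::'n. lborel)) borel (\<lambda>f. \<chi> j. f j)) (box l u) = (\<Prod>b\<in>Basis. (u - l) \<bullet> b)"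
    by (simp add: Basis_cart)
qed simp

lemma gpair_transfer:
  fixes F G :: "'a \<Rightarrow> real" and F' G' :: "'b \<Rightarrow> real"
  assumes gp: "gpair N F G \<eta>" and M: "M = distr N M' T" and T[measurable]: "T \<in> measurable N M'"
    and Fm[measurable]: "F' \<in> borel_measurable M" and Gm[measurable]: "G' \<in> borel_measurable M"
    and surj: "\<And>y. y \<in> space M \<Longrightarrow> \<exists>x\<in>space N. T x = y"
    and FT: "\<And>x. x \<in> space N \<Longrightarrow> F' (T x) = F x" and GT: "\<And>x. x \<in> space N \<Longrightarrow> G' (T x) = G x"
  shows "gpair M F' G' \<eta>"
proof -
  note Gd = gp[unfolded gpair_def]
  have sM: "sets M = sets M'" using M by simp
  have [measurable]: "F \<in> borel_measurable N" "G \<in> borel_measurable N" using Gd by auto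
  have Fm'[measurable]: "F' \<in> borel_measurable M'" using Fm measurable_cong_sets[OF sM refl] by blast
  have Gm'[measurable]: "G' \<in> borel_measurable M'" using Gm measurable_cong_sets[OF sM refl] by blast
  have [measurable]: "(\<lambda>x. F' (T x)) \<in> borel_measurable N" "(\<lambda>x. G' (T x)) \<in> borel_measurable N"
    by measurable
  have dF: "density M F' = distr (density N F) M' T"
  proof -
    have "density M F' = distr (density N (\<lambda>x. F' (T x))) M' T"
      unfolding M using Fm' by (subst density_distr) (auto simp: comp_def)
    also have "density N (\<lambda>x. F' (T x)) = density N F"
      using FT by (intro density_cong) (auto simp: AE_measure intro!: measurable_compose[OF T Fm'])
    finally show ?thesis .
  qed
  have dG: "density M G' = distr (density N G) M' T"
  proof -
    have "density M G' = distr (density N (\<lambda>x. G' (T x))) M' T"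
      unfolding M using Gm' by (subst density_distr) (auto simp: comp_def)
    also have "density N (\<lambda>x. G' (T x)) = density N G"
      using GT by (intro density_cong) (auto simp: AE_measure intro!: measurable_compose[OF T Gm'])
    finally show ?thesis .
  qed
  have pos: "\<forall>y\<in>space M. F' y > 0 \<and> G' y > 0"
    using surj FT GT Gd by fastforce
  have pF: "prob_space (density M F')" unfolding dF
    using Gd by (intro prob_space.prob_space_distr) auto
  have pG: "prob_space (density M G')" unfolding dG
    using Gd by (intro prob_space.prob_space_distr) auto
  have z: "\<forall>y\<in>space M. F' y = G' y" if "\<eta> = 0"
    using surj FT GT Gd that by fastforce
  have D: "distributed (density M F') lborel (\<lambda>y. ln (F' y / G' y)) (normal_density \<eta> (sqrt (2 * \<eta>)))"
    if "\<eta> > 0"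
  proof -
    have D0: "distributed (density N F) lborel (\<lambda>x. ln (F x / G x)) (normal_density \<eta> (sqrt (2 * \<eta>)))"
      using Gd that by auto
    have Lm: "(\<lambda>y. ln (F' y / G' y)) \<in> borel_measurable M'" using Fm' Gm' by measurable
    have "distr (density M F') lborel (\<lambda>y. ln (F' y / G' y))
        = distr (density N F) lborel ((\<lambda>y. ln (F' y / G' y)) \<circ> T)"
      unfolding dF using Lm by (subst distr_distr) auto
    also have "\<dots> = distr (density N F) lborel (\<lambda>x. ln (F x / G x))"
      using FT GT by (intro distr_cong) auto
    finally show ?thesis using D0 Lm unfolding distributed_def
      by (auto simp: measurable_cong_sets[OF sM refl])
  qed
  show ?thesis unfolding gpair_def using Fm Gm pos pF pG z D Gd by auto
qed

lemma gpair_gauss: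
  fixes \<mu> \<mu>' :: "real^'n"
  assumes s: "\<sigma> > 0"
  shows "gpair lborel (\<lambda>y. \<Prod>j\<in>UNIV. normal_density (\<mu> $ j) \<sigma> (y $ j))
     (\<lambda>y. \<Prod>j\<in>UNIV. normal_density (\<mu>' $ j) \<sigma> (y $ j)) ((norm (\<mu> - \<mu>'))\<^sup>2 / (2 * \<sigma>\<^sup>2))"
proof -
  note ps = ps_lborel
  have g: "gpair (PiM UNIV (\<lambda>_::'n. lborel)) (\<lambda>x. \<Prod>j\<in>UNIV. normal_density (\<mu> $ j) \<sigma> (x j))
      (\<lambda>x. \<Prod>j\<in>UNIV. normal_density (\<mu>' $ j) \<sigma> (x j)) (\<Sum>j\<in>UNIV. (\<mu> $ j - \<mu>' $ j)\<^sup>2 / (2 * \<sigma>\<^sup>2))"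
    using gpair_prod[OF ps finite_class.finite_UNIV, of "\<lambda>j. normal_density (\<mu> $ j) \<sigma>" "\<lambda>j. normal_density (\<mu>' $ j) \<sigma>"
        "\<lambda>j. (\<mu> $ j - \<mu>' $ j)\<^sup>2 / (2 * \<sigma>\<^sup>2)"] gpair_normal[OF s] by simp
  have eq: "(\<Sum>j\<in>UNIV. (\<mu> $ j - \<mu>' $ j)\<^sup>2 / (2 * \<sigma>\<^sup>2)) = (norm (\<mu> - \<mu>'))\<^sup>2 / (2 * \<sigma>\<^sup>2)"
    by (simp add: norm_vec_def L2_set_def sum_divide_distrib[symmetric] sum_nonneg)
  show ?thesis
  proof (rule gpair_transfer[OF g[unfolded eq] lborel_cart vec_measurable])
    show "\<exists>x\<in>space (PiM UNIV (\<lambda>_::'n. lborel)). (\<chi> j. x j) = y" for y :: "real^'n"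
      by (rule bexI[of _ "\<lambda>j. y $ j"]) (auto simp: space_PiM)
  qed auto
qed



lemma ceil_count:
  fixes t :: real and n :: nat
  assumes n: "n > 0" and t: "0 \<le> t" "t \<le> 1"
  shows "n * t \<le> card ({..<n} \<inter> {k. real k / n < t})" "card ({..<n} \<inter> {k. real k / n < t}) \<le> n * t + 1"
proof -
  define m where "m = nat \<lceil>n * t\<rceil>"
  have nt: "0 \<le> real n * t" using t by simp
  have c0: "\<lceil>n * t\<rceil> \<ge> 0" using nt by simp
  have ntn: "real n * t \<le> real n" using t by (simp add: mult_left_le)
  have cn: "\<lceil>n * t\<rceil> \<le> int n" using ntn by (simp add: ceiling_le_iff)
  have iff: "real k / n < t \<longleftrightarrow> k < m" for k
  proof -
    have "real k / n < t \<longleftrightarrow> real k < t * n" using n by (intro pos_divide_less_eq) simp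
    also have "\<dots> \<longleftrightarrow> real k < n * t" by (simp only: mult.commute)
    also have "\<dots> \<longleftrightarrow> int k < \<lceil>n * t\<rceil>" by (simp add: less_ceiling_iff)
    also have "\<dots> \<longleftrightarrow> k < m" unfolding m_def by (rule zless_nat_eq_int_zless[symmetric])
    finally show ?thesis .
  qed
  have mn: "m \<le> n" unfolding m_def using cn by (simp add: nat_le_iff)
  have eq: "{..<n} \<inter> {k. real k / n < t} = {..<m}"
  proof (rule set_eqI)
    fix k
    show "k \<in> {..<n} \<inter> {k. real k / n < t} \<longleftrightarrow> k \<in> {..<m}"
      unfolding Int_iff lessThan_iff mem_Collect_eq iff using mn by linarith
  qed
  have rm: "real m = real_of_int \<lceil>n * t\<rceil>" unfolding m_def using c0 by simp
  have l1: "real n * t \<le> real_of_int \<lceil>n * t\<rceil>" by (rule le_of_int_ceiling)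
  have l2: "real_of_int \<lceil>n * t\<rceil> < real n * t + 1" using ceiling_correct[of "real n * t"] by linarith
  show "n * t \<le> card ({..<n} \<inter> {k. real k / n < t})" unfolding eq card_lessThan using rm l1 by linarith
  show "card ({..<n} \<inter> {k. real k / n < t}) \<le> n * t + 1" unfolding eq card_lessThan using rm l2 by linarith
qed

lemma dp_fun:
  fixes h :: "'a \<Rightarrow> real"
  assumes M: "prob_space M" and M': "prob_space M'" and sM: "sets M' = sets M"
    and dp: "\<And>S. S \<in> sets M \<Longrightarrow> measure M S \<le> exp \<epsilon> * measure M' S + \<delta>"
    and hm[measurable]: "h \<in> borel_measurable M" and h01: "\<And>x. x \<in> space M \<Longrightarrow> 0 \<le> h x \<and> h x \<le> 1"
  shows "(\<integral>x. h x \<partial>M) \<le> exp \<epsilon> * (\<integral>x. h x \<partial>M') + \<delta>"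
proof -
  interpret M: prob_space M by fact
  interpret M': prob_space M' by fact
  have spM: "space M' = space M" using sM by (rule sets_eq_imp_space_eq)
  have hm'[measurable]: "h \<in> borel_measurable M'" using hm measurable_cong_sets[OF sM refl] by blast
  have h01': "\<And>x. x \<in> space M' \<Longrightarrow> 0 \<le> h x \<and> h x \<le> 1" using h01 spM by simp
  have ih: "integrable M h" by (intro M.integrable_const_bound[where B=1]) (use h01 in auto)
  have ih': "integrable M' h" by (intro M'.integrable_const_bound[where B=1]) (use h01' in auto)
  have main: "(\<integral>x. h x \<partial>M) \<le> exp \<epsilon> * (\<integral>x. h x \<partial>M') + \<delta> + exp \<epsilon> / n" if n: "n > 0" for n :: nat
  proof -
    define A where "A k = {y\<in>space M. real k / n < h y}" for k :: nat
    have A[measurable]: "A k \<in> sets M" for k unfolding A_def by measurable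
    have A'[measurable]: "A k \<in> sets M'" for k using A sM by simp
    define c where "c x = (\<Sum>k<n. indicator (A k) x) / real n" for x
    have cb: "h x \<le> c x \<and> c x \<le> h x + 1 / n" if x: "x \<in> space M" for x
    proof -
      have "(\<Sum>k<n. indicator (A k) x :: real) = (\<Sum>k<n. of_bool (real k / n < h x))"
        using x by (intro sum.cong) (auto simp: A_def indicator_def)
      also have "\<dots> = card ({..<n} \<inter> {k. real k / n < h x})" by simp
      finally have e: "(\<Sum>k<n. indicator (A k) x :: real) = card ({..<n} \<inter> {k. real k / n < h x})" .
      note cc = ceil_count[OF n, of "h x"]
      show ?thesis using cc h01[OF x] n unfolding c_def e by (auto simp: field_simps)
    qed
    have cb': "h x \<le> c x \<and> c x \<le> h x + 1 / n" if "x \<in> space M'" for x using cb that spM by simp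
    have ic: "(\<integral>x. c x \<partial>N) = (\<Sum>k<n. measure N (A k)) / n" if N: "prob_space N" "sets N = sets M" for N
    proof -
      interpret N: prob_space N by fact
      have [simp]: "A k \<in> sets N" for k using N by simp
      show ?thesis unfolding c_def
        by (simp add: integral_sum N.emeasure_eq_measure)
    qed
    have intc: "integrable N c" if N: "prob_space N" "sets N = sets M" for N
    proof -
      interpret N: prob_space N by fact
      have [simp]: "A k \<in> sets N" for k using N by simp
      show ?thesis unfolding c_def
        by (intro integrable_divide integrable_sum integrable_real_indicator) (simp_all add: N.emeasure_eq_measure)
    qed
    note icM = intc[OF M refl] and icM' = intc[OF M' sM]
    have "(\<integral>x. h x \<partial>M) \<le> (\<integral>x. c x \<partial>M)"
      using cb ih icM by (intro integral_mono_AE) (auto intro!: AE_I2)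
    also have "\<dots> = (\<Sum>k<n. measure M (A k)) / n" using ic[OF M] by simp
    also have "\<dots> \<le> (\<Sum>k<n. exp \<epsilon> * measure M' (A k) + \<delta>) / n"
      using n by (intro divide_right_mono sum_mono dp A) auto
    also have "\<dots> = exp \<epsilon> * ((\<Sum>k<n. measure M' (A k)) / n) + \<delta>"
      using n by (simp add: sum.distrib sum_distrib_left[symmetric] field_simps)
    also have "(\<Sum>k<n. measure M' (A k)) / n = (\<integral>x. c x \<partial>M')" using ic[OF M' sM] by simp
    also have "(\<integral>x. c x \<partial>M') \<le> (\<integral>x. h x + 1 / n \<partial>M')"
      using cb' ih' icM' by (intro integral_mono_AE) (auto intro!: AE_I2)
    also have "\<dots> = (\<integral>x. h x \<partial>M') + 1 / n" using ih' by (simp add: M'.prob_space)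
    finally show ?thesis by (simp add: distrib_left add_ac)
  qed
  show ?thesis
  proof (rule field_le_epsilon)
    fix e :: real assume e: "e > 0"
    obtain n :: nat where n: "exp \<epsilon> / e < n" using reals_Archimedean2 by blast
    then have n0: "n > 0" using e by (metis exp_gt_zero divide_pos_pos of_nat_0_less_iff order.strict_trans)
    have "exp \<epsilon> / n \<le> e" using n e n0 by (simp add: field_simps)
    then show "(\<integral>x. h x \<partial>M) \<le> exp \<epsilon> * (\<integral>x. h x \<partial>M') + \<delta> + e" using main[OF n0] by linarith
  qed
qed


lemma bind_as_integral:
  assumes M: "prob_space M" and K[measurable]: "K \<in> measurable M (subprob_algebra N)" and T: "T \<in> sets N"
  shows "measure (M \<bind> K) T = (\<integral>x. measure (K x) T \<partial>M)"
    and "(\<lambda>x. measure (K x) T) \<in> borel_measurable M"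
    and "\<And>x. x \<in> space M \<Longrightarrow> 0 \<le> measure (K x) T \<and> measure (K x) T \<le> 1"
proof -
  interpret M: prob_space M by fact
  have ne: "space M \<noteq> {}" by (rule M.not_empty)
  have sp: "subprob_space (K x)" if "x \<in> space M" for x
    using measurable_space[OF K that] by (simp add: space_subprob_algebra)
  have hm[measurable]: "(\<lambda>x. measure (K x) T) \<in> borel_measurable M"
    unfolding measure_def using T by measurable
  then show "(\<lambda>x. measure (K x) T) \<in> borel_measurable M" .
  show b: "0 \<le> measure (K x) T \<and> measure (K x) T \<le> 1" if "x \<in> space M" for x
    using subprob_space.subprob_measure_le_1[OF sp[OF that]] by simp
  have int: "integrable M (\<lambda>x. measure (K x) T)"
    by (intro M.integrable_const_bound[where B=1]) (use b in auto)
  have "emeasure (M \<bind> K) T = (\<integral>\<^sup>+x. emeasure (K x) T \<partial>M)"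
    using ne T by (intro emeasure_bind) auto
  also have "\<dots> = (\<integral>\<^sup>+x. ennreal (measure (K x) T) \<partial>M)"
    by (intro nn_integral_cong) (auto simp: finite_measure.emeasure_eq_measure[OF subprob_space.axioms(1)[OF sp]])
  also have "\<dots> = ennreal (\<integral>x. measure (K x) T \<partial>M)"
    using int by (intro nn_integral_eq_integral) auto
  finally show "measure (M \<bind> K) T = (\<integral>x. measure (K x) T \<partial>M)"
    by (simp add: measure_def integral_nonneg_AE)
qed

lemma dp_bind:
  assumes M: "prob_space M" and M': "prob_space M'" and sM: "sets M' = sets M"
    and dp: "\<And>S. S \<in> sets M \<Longrightarrow> measure M S \<le> exp \<epsilon> * measure M' S + \<delta>"
    and K: "K \<in> measurable M (subprob_algebra N)" and T: "T \<in> sets N"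
  shows "measure (M \<bind> K) T \<le> exp \<epsilon> * measure (M' \<bind> K) T + \<delta>"
proof -
  have K': "K \<in> measurable M' (subprob_algebra N)" using K measurable_cong_sets[OF sM refl] by blast
  note b = bind_as_integral[OF M K T] and b' = bind_as_integral[OF M' K' T]
  show ?thesis unfolding b(1) b'(1)
    by (rule dp_fun[OF M M' sM dp b(2) b(3)])
qed



lemma tr_inner: "(transpose C *v u) \<bullet> w = u \<bullet> (C *v w)" for C :: "real^'n^'q"
  by (simp add: dot_lmul_matrix)

lemma A_inner: "((transpose C ** C) *v v) \<bullet> w = (C *v v) \<bullet> (C *v w)" for C :: "real^'n^'q"
  by (simp only: matrix_vector_mul_assoc[symmetric] tr_inner)

lemma eig_finite:
  fixes C :: "real^'n^'q"
  shows "finite {e. \<exists>v. v \<noteq> 0 \<and> (transpose C ** C) *v v = e *\<^sub>R v}"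
proof -
  let ?A = "transpose C ** C"
  let ?E = "{e. \<exists>v. v \<noteq> 0 \<and> ?A *v v = e *\<^sub>R v}"
  define ev where "ev e = (SOME v. v \<noteq> 0 \<and> ?A *v v = e *\<^sub>R v)" for e
  have ev: "ev e \<noteq> 0 \<and> ?A *v ev e = e *\<^sub>R ev e" if "e \<in> ?E" for e
  proof -
    from that obtain v where "v \<noteq> 0 \<and> ?A *v v = e *\<^sub>R v" by auto
    then show ?thesis unfolding ev_def by (rule someI)
  qed
  have orth: "ev e \<bullet> ev e' = 0" if "e \<in> ?E" "e' \<in> ?E" "e \<noteq> e'" for e e'
  proof -
    have "e * (ev e \<bullet> ev e') = (?A *v ev e) \<bullet> ev e'" using ev[OF that(1)] by simp
    also have "\<dots> = (C *v ev e) \<bullet> (C *v ev e')" by (rule A_inner)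
    also have "\<dots> = (?A *v ev e') \<bullet> ev e" unfolding A_inner by (rule inner_commute)
    also have "\<dots> = e' * (ev e \<bullet> ev e')" using ev[OF that(2)] by (simp add: inner_commute)
    finally have "(e - e') * (ev e \<bullet> ev e') = 0" by (simp add: left_diff_distrib)
    then show ?thesis using that(3) by simp
  qed
  have inj: "inj_on ev ?E"
  proof (rule inj_onI)
    fix e e' assume e: "e \<in> ?E" and e': "e' \<in> ?E" and eq: "ev e = ev e'"
    show "e = e'"
    proof (rule ccontr)
      assume "e \<noteq> e'"
      then have "ev e \<bullet> ev e' = 0" using orth e e' by blast
      then have "ev e \<bullet> ev e = 0" using eq by simp
      then have "ev e = 0" by simp
      then show False using ev[OF e] by simp
    qed
  qed
  have "finite ?E \<and> card ?E \<le> DIM(real^'n)"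
  proof (rule finite_if_finite_subsets_card_bdd)
    fix G assume G: "G \<subseteq> ?E" "finite G"
    have "independent (ev ` G)"
    proof (rule pairwise_orthogonal_independent)
      show "pairwise orthogonal (ev ` G)"
        unfolding pairwise_def orthogonal_def using G orth by blast
      show "0 \<notin> ev ` G" using G ev by force
    qed
    then have "card (ev ` G) \<le> DIM(real^'n)" using independent_bound by blast
    moreover have "card (ev ` G) = card G" using inj G by (intro card_image) (auto intro: inj_on_subset)
    ultimately show "card G \<le> DIM(real^'n)" by simp
  qed
  then show ?thesis by simp
qed

lemma psd_zero:
  fixes B :: "real^'n \<Rightarrow> real^'n"
  assumes psd: "\<And>v. B v \<bullet> v \<ge> 0" and sym: "\<And>v w. B v \<bullet> w = B w \<bullet> v"
    and add: "\<And>x y. B (x + y) = B x + B y" and sc: "\<And>t x. B (t *\<^sub>R x) = t *\<^sub>R B x"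
    and z: "B v0 \<bullet> v0 = 0"
  shows "B v0 = 0"
proof (rule ccontr)
  assume nz: "B v0 \<noteq> 0"
  define u where "u = B v0"
  define a where "a = u \<bullet> u"
  define c where "c = B u \<bullet> u"
  have a0: "a > 0" using nz unfolding a_def u_def by simp
  have c0: "c \<ge> 0" unfolding c_def using psd by simp
  define t where "t = - a / (c + 1)"
  have t0: "t < 0" unfolding t_def using a0 c0 by simp
  have "c / (c + 1) \<le> 1" using c0 by simp
  then have "a * (c / (c + 1)) \<le> a * 1" using a0 by (intro mult_left_mono) auto
  moreover have "t * c = - (a * (c / (c + 1)))" unfolding t_def by simp
  ultimately have tc: "t * c \<ge> - a" by linarith
  have "B (v0 + t *\<^sub>R u) \<bullet> (v0 + t *\<^sub>R u) = t * (2 * a + t * c)"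
  proof -
    have "B (v0 + t *\<^sub>R u) \<bullet> (v0 + t *\<^sub>R u)
        = B v0 \<bullet> v0 + t * (B v0 \<bullet> u) + t * (B u \<bullet> v0) + t * t * (B u \<bullet> u)"
      by (simp add: add sc inner_add_left inner_add_right algebra_simps)
    also have "B u \<bullet> v0 = B v0 \<bullet> u" by (rule sym)
    finally show ?thesis using z unfolding a_def c_def u_def by (simp add: algebra_simps)
  qed
  also have "\<dots> < 0" using t0 tc a0 by (intro mult_neg_pos) auto
  finally show False using psd[of "v0 + t *\<^sub>R u"] by simp
qed

lemma s1_bound:
  fixes C :: "real^'n^'q"
  shows "norm (C *v v) \<le> s1 C * norm v"
proof -
  let ?A = "transpose C ** C"
  let ?E = "{e. \<exists>v. v \<noteq> 0 \<and> ?A *v v = e *\<^sub>R v}"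
  define f where "f v = (norm (C *v v))\<^sup>2" for v :: "real^'n"
  have cf: "continuous_on (sphere 0 1) f"
    unfolding f_def by (intro continuous_intros linear_continuous_on matrix_vector_mul_bounded_linear)
  have ne: "sphere (0::real^'n) 1 \<noteq> {}"
    using norm_axis_1 by (metis mem_sphere_0 empty_iff)
  obtain v0 where v0: "v0 \<in> sphere 0 1" and mx: "\<And>y. y \<in> sphere 0 1 \<Longrightarrow> f y \<le> f v0"
    using continuous_attains_sup[OF compact_sphere ne cf] by blast
  define lam where "lam = f v0"
  have nv0: "norm v0 = 1" using v0 by simp
  have bound: "(norm (C *v v))\<^sup>2 \<le> lam * (norm v)\<^sup>2" for v
  proof (cases "v = 0")
    case True then show ?thesis by simp
  next
    case False
    let ?w = "(1 / norm v) *\<^sub>R v"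
    have "?w \<in> sphere 0 1" using False by simp
    then have "f ?w \<le> lam" using mx lam_def by blast
    moreover have "f ?w = (norm (C *v v))\<^sup>2 / (norm v)\<^sup>2"
      unfolding f_def by (simp add: matrix_vector_mult_scaleR power_divide)
    ultimately show ?thesis using False by (simp add: divide_le_eq)
  qed
  define B where "B v = lam *\<^sub>R v - ?A *v v" for v
  have Bv: "B v \<bullet> w = lam * (v \<bullet> w) - (C *v v) \<bullet> (C *v w)" for v w
    unfolding B_def by (simp add: A_inner inner_diff_left)
  have "B v0 = 0"
  proof (rule psd_zero[where B=B])
    show "B v \<bullet> v \<ge> 0" for v using bound[of v] by (simp add: Bv power2_norm_eq_inner)
    show "B v \<bullet> w = B w \<bullet> v" for v w
      unfolding Bv using inner_commute[of v w] inner_commute[of "C *v v" "C *v w"] by simp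
    show "B (x + y) = B x + B y" for x y
    proof -
      have "?A *v (x + y) = ?A *v x + ?A *v y" by (rule matrix_vector_right_distrib)
      then show ?thesis unfolding B_def by (simp add: scaleR_add_right)
    qed
    show "B (t *\<^sub>R x) = t *\<^sub>R B x" for t x
    proof -
      have "?A *v (t *\<^sub>R x) = t *\<^sub>R (?A *v x)" by (rule matrix_vector_mult_scaleR)
      then show ?thesis unfolding B_def by (simp add: scaleR_diff_right)
    qed
    show "B v0 \<bullet> v0 = 0" using nv0 by (simp add: Bv lam_def f_def power2_norm_eq_inner norm_eq_1)
  qed
  then have "?A *v v0 = lam *\<^sub>R v0"
    unfolding B_def by simp
  then have lamE: "lam \<in> ?E" using nv0 by (intro CollectI exI[of _ v0]) auto
  have "lam \<le> Max ?E" using eig_finite lamE by (intro Max_ge)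
  then have sl: "sqrt lam \<le> s1 C" unfolding s1_def by simp
  have "norm (C *v v) = sqrt ((norm (C *v v))\<^sup>2)" by simp
  also have "\<dots> \<le> sqrt (lam * (norm v)\<^sup>2)" using bound by (rule real_sqrt_le_mono)
  also have "\<dots> = sqrt lam * norm v" by (simp add: real_sqrt_mult)
  also have "\<dots> \<le> s1 C * norm v" using sl by (simp add: mult_right_mono)
  finally show ?thesis .
qed



lemma dp_extend:
  fixes M M' :: "'i \<Rightarrow> 'a measure"
  assumes pM: "\<And>i. prob_space (M i)" and pM': "\<And>i. prob_space (M' i)" and sMM: "\<And>i. sets (M' i) = sets (M i)"
    and fin: "\<And>J X. finite J \<Longrightarrow> X \<in> sets (PiM J M) \<Longrightarrow> measure (PiM J M) X \<le> exp \<epsilon> * measure (PiM J M') X + \<delta>"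
    and S: "S \<in> sets (PiM UNIV M)"
  shows "measure (PiM UNIV M) S \<le> exp \<epsilon> * measure (PiM UNIV M') S + \<delta>"
proof -
  interpret P: product_prob_space M UNIV
    unfolding product_prob_space_def product_prob_space_axioms_def product_sigma_finite_def
    using pM by (auto intro: prob_space_imp_sigma_finite)
  interpret P': product_prob_space M' UNIV
    unfolding product_prob_space_def product_prob_space_axioms_def product_sigma_finite_def
    using pM' by (auto intro: prob_space_imp_sigma_finite)
  let ?P = "PiM UNIV M" and ?P' = "PiM UNIV M'"
  have spMM: "space (M' i) = space (M i)" for i using sMM by (rule sets_eq_imp_space_eq)
  have sPJ: "sets (PiM J M') = sets (PiM J M)" for J using sMM by (intro sets_PiM_cong) auto
  have sP: "sets ?P' = sets ?P" by (rule sPJ)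
  have spP: "space ?P' = space ?P" using sP by (rule sets_eq_imp_space_eq)
  have embeq: "prod_emb UNIV M' J X = prod_emb UNIV M J X" for J X
    unfolding prod_emb_def using spMM by simp
  define Cyl where "Cyl = {prod_emb UNIV M J X | J X. finite J \<and> X \<in> sets (PiM J M)}"
  have cyl_sets: "A \<in> sets ?P" if "A \<in> Cyl" for A
    using that unfolding Cyl_def by auto
  have cyl_sets': "A \<in> sets ?P'" if "A \<in> Cyl" for A using cyl_sets[OF that] sP by simp
  have cyl_dp: "measure ?P A \<le> exp \<epsilon> * measure ?P' A + \<delta>" if "A \<in> Cyl" for A
  proof -
    from that obtain J X where A: "A = prod_emb UNIV M J X" and J: "finite J" and X: "X \<in> sets (PiM J M)"
      unfolding Cyl_def by auto
    have X': "X \<in> sets (PiM J M')" using X sPJ by simp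
    have "measure ?P A = measure (PiM J M) X"
      unfolding A measure_def using P.emeasure_PiM_emb'[OF _ J X] by simp
    moreover have "measure ?P' A = measure (PiM J M') X"
      unfolding A embeq[symmetric] measure_def using P'.emeasure_PiM_emb'[OF _ J X'] by simp
    ultimately show ?thesis using fin[OF J X] by simp
  qed
  have cyl_empty: "{} \<in> Cyl" unfolding Cyl_def
    by (rule CollectI, rule exI[of _ "{}"], rule exI[of _ "{}"]) simp
  have cyl_compl: "space ?P - A \<in> Cyl" if "A \<in> Cyl" for A
  proof -
    from that obtain J X where A: "A = prod_emb UNIV M J X" and J: "finite J" and X: "X \<in> sets (PiM J M)"
      unfolding Cyl_def by auto
    have "space ?P - A = prod_emb UNIV M J (space (PiM J M) - X)"
      unfolding A by (auto simp: prod_emb_def space_PiM PiE_iff)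
    then show ?thesis unfolding Cyl_def using J X by blast
  qed
  have cyl_Un: "A \<union> B \<in> Cyl" if "A \<in> Cyl" "B \<in> Cyl" for A B
  proof -
    from that obtain J X K Y where A: "A = prod_emb UNIV M J X" and J: "finite J" and X: "X \<in> sets (PiM J M)"
      and B: "B = prod_emb UNIV M K Y" and K: "finite K" and Y: "Y \<in> sets (PiM K M)"
      unfolding Cyl_def by blast
    have "A \<union> B = prod_emb UNIV M (J \<union> K) (prod_emb (J \<union> K) M J X \<union> prod_emb (J \<union> K) M K Y)"
      unfolding A B prod_emb_Un by simp
    moreover have "prod_emb (J \<union> K) M J X \<union> prod_emb (J \<union> K) M K Y \<in> sets (PiM (J \<union> K) M)"
      using X Y by (intro sets.Un measurable_prod_emb) auto
    ultimately show ?thesis unfolding Cyl_def using J K by blast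
  qed
  have cyl_UN: "(\<Union>i<n. B i) \<in> Cyl" if "\<forall>i<n. B i \<in> Cyl" for B and n :: nat
    using that
  proof (induction n)
    case 0 show ?case using cyl_empty by simp
  next
    case (Suc n)
    have "(\<Union>i<Suc n. B i) = B n \<union> (\<Union>i<n. B i)" by (auto simp: lessThan_Suc)
    then show ?case using Suc by (auto intro!: cyl_Un)
  qed
  have cyl_gen: "A \<in> Cyl" if "A \<in> prod_algebra UNIV M" for A
  proof -
    from prod_algebraE[OF that] obtain J E where "A = prod_emb UNIV M J (Pi\<^sub>E J E)" "finite J"
      "\<And>i. i \<in> J \<Longrightarrow> E i \<in> sets (M i)" by metis
    then show ?thesis unfolding Cyl_def by (auto intro!: sets_PiM_I_finite)
  qed
  define sd where "sd S A = (S - A) \<union> (A - S)" for S A :: "('i \<Rightarrow> 'a) set"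
  define D where "D S \<longleftrightarrow> (\<forall>e>0. \<exists>A\<in>Cyl. measure ?P (sd S A) < e \<and> measure ?P' (sd S A) < e)" for S
  have sd_sets: "sd S A \<in> sets ?P" if "S \<in> sets ?P" "A \<in> Cyl" for S A
    using that cyl_sets unfolding sd_def by auto
  have DS: "D S" if S: "S \<in> sigma_sets (space ?P) (prod_algebra UNIV M)" for S
    using Int_stable_prod_algebra prod_algebra_sets_into_space[unfolded space_PiM[symmetric]] S
  proof (induction rule: sigma_sets_induct_disjoint)
    case (basic A)
    then show ?case unfolding D_def using cyl_gen by (intro allI impI bexI[of _ A]) (auto simp: sd_def)
  next
    case empty
    then show ?case unfolding D_def using cyl_empty by (intro allI impI bexI[of _ "{}"]) (auto simp: sd_def)
  next
    case (compl A)
    have Asub: "A \<subseteq> space ?P"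
      using compl(1) prod_algebra_sets_into_space[unfolded space_PiM[symmetric]] by (rule sigma_sets_into_sp[rotated])
    show ?case unfolding D_def
    proof (intro allI impI)
      fix e :: real assume e: "e > 0"
      from compl(2) e obtain B where B: "B \<in> Cyl" "measure ?P (sd A B) < e" "measure ?P' (sd A B) < e"
        unfolding D_def by blast
      have Bsub: "B \<subseteq> space ?P" using cyl_sets[OF B(1)] sets.sets_into_space by blast
      have "sd (space ?P - A) (space ?P - B) = sd A B" using Asub Bsub unfolding sd_def by auto
      then show "\<exists>C\<in>Cyl. measure ?P (sd (space ?P - A) C) < e \<and> measure ?P' (sd (space ?P - A) C) < e"
        using B cyl_compl by (intro bexI[of _ "space ?P - B"]) auto
    qed
  next
    case (union A)
    have Ams: "A i \<in> sets ?P" for i using union(2) unfolding sets_PiM space_PiM by auto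
    have Ams': "A i \<in> sets ?P'" for i using Ams sP by simp
    define U where "U = (\<Union>i. A i)"
    define Cn where "Cn n = (\<Union>i<n. A i)" for n
    have Ums: "U \<in> sets ?P" unfolding U_def using Ams by auto
    have Cms: "Cn n \<in> sets ?P" for n unfolding Cn_def using Ams by auto
    have CU: "Cn n \<subseteq> U" for n unfolding Cn_def U_def by auto
    have incC: "incseq Cn" unfolding Cn_def incseq_def by (auto intro: order.strict_trans2)
    have UC: "(\<Union>n. Cn n) = U" unfolding Cn_def U_def by auto
    have lim1: "(\<lambda>n. measure ?P (U - Cn n)) \<longlonglongrightarrow> 0"
    proof -
      have "(\<lambda>n. measure ?P (Cn n)) \<longlonglongrightarrow> measure ?P U"
        using P.P.finite_Lim_measure_incseq[of Cn] Cms incC UC by auto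
      from tendsto_diff[OF tendsto_const[of "measure ?P U"] this]
      have "(\<lambda>n. measure ?P U - measure ?P (Cn n)) \<longlonglongrightarrow> 0" by simp
      moreover have "measure ?P (U - Cn n) = measure ?P U - measure ?P (Cn n)" for n
        using Cms Ums CU by (intro P.P.finite_measure_Diff) auto
      ultimately show ?thesis by simp
    qed
    have lim2: "(\<lambda>n. measure ?P' (U - Cn n)) \<longlonglongrightarrow> 0"
    proof -
      have "(\<lambda>n. measure ?P' (Cn n)) \<longlonglongrightarrow> measure ?P' U"
        using P'.P.finite_Lim_measure_incseq[of Cn] Cms incC UC sP by auto
      from tendsto_diff[OF tendsto_const[of "measure ?P' U"] this]
      have "(\<lambda>n. measure ?P' U - measure ?P' (Cn n)) \<longlonglongrightarrow> 0" by simp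
      moreover have "measure ?P' (U - Cn n) = measure ?P' U - measure ?P' (Cn n)" for n
        using Cms Ums CU sP by (intro P'.P.finite_measure_Diff) auto
      ultimately show ?thesis by simp
    qed
    show ?case unfolding D_def U_def[symmetric]
    proof (intro allI impI)
      fix e :: real assume e: "e > 0"
      have "eventually (\<lambda>n. measure ?P (U - Cn n) < e / 2 \<and> measure ?P' (U - Cn n) < e / 2) sequentially"
        using order_tendstoD(2)[OF lim1, of "e/2"] order_tendstoD(2)[OF lim2, of "e/2"] e
        by (auto intro: eventually_conj)
      then obtain n where n1: "measure ?P (U - Cn n) < e / 2" and n2: "measure ?P' (U - Cn n) < e / 2"
        by (auto simp: eventually_sequentially)
      define e' where "e' = e / (2 * (real n + 1))"
      have e'0: "e' > 0" unfolding e'_def using e by simp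
      have "\<forall>i. \<exists>B\<in>Cyl. measure ?P (sd (A i) B) < e' \<and> measure ?P' (sd (A i) B) < e'"
        using union(3) e'0 unfolding D_def by blast
      then obtain B where B: "\<And>i. B i \<in> Cyl" "\<And>i. measure ?P (sd (A i) (B i)) < e'"
        "\<And>i. measure ?P' (sd (A i) (B i)) < e'" by metis
      define BB where "BB = (\<Union>i<n. B i)"
      have BB: "BB \<in> Cyl" unfolding BB_def using B(1) by (intro cyl_UN) auto
      have sub: "sd U BB \<subseteq> (U - Cn n) \<union> (\<Union>i<n. sd (A i) (B i))"
        unfolding sd_def U_def BB_def Cn_def by auto
      have sdms: "sd (A i) (B i) \<in> sets ?P" for i using sd_sets[OF Ams B(1)] .
      have sum_le: "(\<Sum>i<n. e') \<le> e / 2" unfolding e'_def using e by (simp add: field_simps)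
      have bnd: "measure Q (sd U BB) < e"
        if Q: "Q = ?P \<or> Q = ?P'" and t: "measure Q (U - Cn n) < e / 2"
          and pieces: "\<And>i. measure Q (sd (A i) (B i)) < e'" for Q
      proof -
        interpret Q: prob_space Q using Q P.P.prob_space_axioms P'.P.prob_space_axioms by auto
        have sQ: "sets Q = sets ?P" using Q sP by auto
        have "measure Q (sd U BB) \<le> measure Q ((U - Cn n) \<union> (\<Union>i<n. sd (A i) (B i)))"
          using sub Ums Cms sdms sQ by (intro Q.finite_measure_mono) auto
        also have "\<dots> \<le> measure Q (U - Cn n) + measure Q (\<Union>i<n. sd (A i) (B i))"
          using Ums Cms sdms sQ by (intro measure_Un_le) auto
        also have "measure Q (\<Union>i<n. sd (A i) (B i)) \<le> (\<Sum>i<n. measure Q (sd (A i) (B i)))"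
          using sdms sQ by (intro measure_UNION_le) auto
        also have "\<dots> \<le> (\<Sum>i<n. e')" using pieces by (intro sum_mono less_imp_le) auto
        finally show ?thesis using t sum_le by linarith
      qed
      show "\<exists>C\<in>Cyl. measure ?P (sd U C) < e \<and> measure ?P' (sd U C) < e"
        using BB bnd[OF _ n1 B(2)] bnd[OF _ n2 B(3)] by blast
    qed
  qed
  have SD: "D S" using S DS by (simp add: sets_PiM space_PiM)
  have Ssub: "S \<in> sets ?P" by (rule S)
  show ?thesis
  proof (rule field_le_epsilon)
    fix e :: real assume e: "e > 0"
    define e' where "e' = e / (exp \<epsilon> + 1)"
    have e'0: "e' > 0" unfolding e'_def using e by (simp add: add_pos_pos)
    from SD e'0 obtain A where A: "A \<in> Cyl" "measure ?P (sd S A) < e'" "measure ?P' (sd S A) < e'"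
      unfolding D_def by blast
    have "measure ?P S \<le> measure ?P (A \<union> sd S A)"
      using Ssub sd_sets[OF Ssub A(1)] cyl_sets[OF A(1)] by (intro P.P.finite_measure_mono) (auto simp: sd_def)
    also have "\<dots> \<le> measure ?P A + measure ?P (sd S A)"
      using sd_sets[OF Ssub A(1)] cyl_sets[OF A(1)] by (intro measure_Un_le) auto
    also have "\<dots> \<le> exp \<epsilon> * measure ?P' A + \<delta> + e'" using cyl_dp[OF A(1)] A(2) by linarith
    also have "measure ?P' A \<le> measure ?P' (S \<union> sd S A)"
      using Ssub sd_sets[OF Ssub A(1)] cyl_sets[OF A(1)] sP by (intro P'.P.finite_measure_mono) (auto simp: sd_def)
    also have "\<dots> \<le> measure ?P' S + measure ?P' (sd S A)"
      using sd_sets[OF Ssub A(1)] Ssub sP by (intro measure_Un_le) auto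
    also have "\<dots> \<le> measure ?P' S + e'" using A(3) by simp
    finally have "measure ?P S \<le> exp \<epsilon> * measure ?P' S + \<delta> + (exp \<epsilon> + 1) * e'"
      by (simp add: algebra_simps)
    also have "(exp \<epsilon> + 1) * e' = e"
    proof -
      have ne: "exp \<epsilon> + 1 \<noteq> 0" using exp_gt_zero[of \<epsilon>] by linarith
      show ?thesis unfolding e'_def using ne by simp
    qed
    finally show "measure ?P S \<le> exp \<epsilon> * measure ?P' S + \<delta> + e" .
  qed
qed



lemma ps_lborel': "product_sigma_finite (\<lambda>_::'i. lborel :: ('a::euclidean_space) measure)"
  by (simp add: product_sigma_finite_def lborel.sigma_finite_measure_axioms)

lemma gauss_sets: "sets (gauss \<mu> \<sigma>) = sets borel"
  by (simp add: gauss_def)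

lemma gauss_dens: "\<sigma> \<noteq> 0 \<Longrightarrow> gauss \<mu> \<sigma> = density lborel (\<lambda>y. \<Prod>j\<in>UNIV. normal_density (\<mu> $ j) \<sigma> (y $ j))"
  by (simp add: gauss_def)

lemma gauss_prob: "\<sigma> > 0 \<Longrightarrow> prob_space (gauss \<mu> \<sigma>)"
  using gpair_gauss[of \<sigma> \<mu> \<mu>] by (simp add: gauss_dens gpair_def)

lemma dp_triv:
  assumes "\<epsilon> \<ge> 0" "\<delta> \<ge> 0"
  shows "measure M S \<le> exp \<epsilon> * measure M S + \<delta>"
proof -
  have "measure M S \<le> exp \<epsilon> * measure M S" using assms by (simp add: mult_le_cancel_right1)
  then show ?thesis using assms by simp
qed

lemma dp_post:
  assumes base: "\<And>x x'. Adj x x' \<Longrightarrow> prob_space (M x) \<and> prob_space (M x') \<and> sets (M x) = sets B \<and> sets (M x') = sets B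
       \<and> (\<forall>S\<in>sets B. measure (M x) S \<le> exp \<epsilon> * measure (M x') S + \<delta>)"
    and K: "K \<in> measurable B (subprob_algebra N)"
  shows "diff_private Adj (\<lambda>x. M x \<bind> K) \<epsilon> \<delta>"
  unfolding diff_private_def
proof (intro allI impI ballI)
  fix x x' T assume A: "Adj x x'" and T: "T \<in> sets (M x \<bind> K)"
  note b = base[OF A]
  have Kx: "K \<in> measurable (M x) (subprob_algebra N)" using K b measurable_cong_sets by blast
  have ne: "space (M x) \<noteq> {}" using b prob_space.not_empty by blast
  have "sets (M x \<bind> K) = sets N"
    using ne subprob_measurableD(2)[OF Kx] by (intro sets_bind) auto
  then have TN: "T \<in> sets N" using T by simp
  show "measure (M x \<bind> K) T \<le> exp \<epsilon> * measure (M x' \<bind> K) T + \<delta>"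
    using b Kx TN by (intro dp_bind) auto
qed

lemma static_part:
  fixes \<beta> \<sigma> \<epsilon> \<delta> :: real and r r' :: "real^'n"
  assumes e: "\<epsilon> > 0" and d: "0 < \<delta>" "\<delta> < 1" and b: "\<beta> > 0" and s: "\<sigma> \<ge> kappa \<delta> \<epsilon> * \<beta>"
    and adj: "Adj_static \<beta> r r'"
  shows "prob_space (ref_mech \<sigma> r) \<and> prob_space (ref_mech \<sigma> r') \<and>
     sets (ref_mech \<sigma> r) = sets (borel :: (real^'n) measure) \<and> sets (ref_mech \<sigma> r') = sets (borel :: (real^'n) measure) \<and>
     (\<forall>S\<in>sets borel. measure (ref_mech \<sigma> r) S \<le> exp \<epsilon> * measure (ref_mech \<sigma> r') S + \<delta>)"
proof -
  have k0: "kappa \<delta> \<epsilon> > 0" using kappa_props[OF e] by simp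
  have s0: "\<sigma> > 0" using s k0 b by (smt (verit) mult_pos_pos)
  have nr: "norm (r - r') \<le> \<beta>" using adj by (simp add: Adj_static_def)
  have cond: "sqrt (2 * ((norm (r - r'))\<^sup>2 / (2 * \<sigma>\<^sup>2))) \<le> 1 / kappa \<delta> \<epsilon>"
  proof -
    have "sqrt (2 * ((norm (r - r'))\<^sup>2 / (2 * \<sigma>\<^sup>2))) = norm (r - r') / \<sigma>"
      using s0 by (simp add: real_sqrt_divide)
    also have "\<dots> \<le> \<beta> / \<sigma>" using nr s0 by (simp add: divide_right_mono)
    also have "\<dots> \<le> 1 / kappa \<delta> \<epsilon>" using s s0 k0 b by (simp add: field_simps)
    finally show ?thesis .
  qed
  note g = gpair_gauss[OF s0, of r r']
  show ?thesis
    using gauss_prob[OF s0, of r] gauss_prob[OF s0, of r'] gpair_dp[OF g e d(1) d(2) cond] s0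
    by (simp add: ref_mech_def gauss_sets gauss_dens)
qed


lemma traj_part:
  fixes C :: "real^'n^'q" and x x' :: "nat \<Rightarrow> real^'n" and b \<sigma> \<epsilon> \<delta> :: real
  assumes e: "\<epsilon> > 0" and d: "0 < \<delta>" "\<delta> < 1" and b: "b > 0" and s: "\<sigma> \<ge> kappa \<delta> \<epsilon> * s1 C * b"
    and s1p: "s1 C > 0" and adj: "Adj_traj b x x'"
  shows "prob_space (traj_mech C \<sigma> x) \<and> prob_space (traj_mech C \<sigma> x') \<and>
     sets (traj_mech C \<sigma> x) = sets (PiM UNIV (\<lambda>_::nat. borel :: (real^'q) measure)) \<and>
     sets (traj_mech C \<sigma> x') = sets (PiM UNIV (\<lambda>_::nat. borel :: (real^'q) measure)) \<and>
     (\<forall>S\<in>sets (PiM UNIV (\<lambda>_::nat. borel :: (real^'q) measure)).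
        measure (traj_mech C \<sigma> x) S \<le> exp \<epsilon> * measure (traj_mech C \<sigma> x') S + \<delta>)"
proof -
  have k0: "kappa \<delta> \<epsilon> > 0" using kappa_props[OF e] by simp
  have s0: "\<sigma> > 0" using s k0 b s1p by (smt (verit) mult_pos_pos)
  define M where "M k = gauss (C *v x k) \<sigma>" for k
  define M' where "M' k = gauss (C *v x' k) \<sigma>" for k
  have pM: "prob_space (M k)" for k unfolding M_def using gauss_prob[OF s0] .
  have pM': "prob_space (M' k)" for k unfolding M'_def using gauss_prob[OF s0] .
  have sMM: "sets (M' k) = sets (M k)" for k unfolding M_def M'_def by (simp add: gauss_sets)
  have tm: "traj_mech C \<sigma> x = PiM UNIV M" "traj_mech C \<sigma> x' = PiM UNIV M'"
    unfolding traj_mech_def M_def M'_def by simp_all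
  have sets1: "sets (PiM UNIV M) = sets (PiM UNIV (\<lambda>_::nat. borel :: (real^'q) measure))"
    unfolding M_def by (intro sets_PiM_cong) (auto simp: gauss_sets)
  have sets2: "sets (PiM UNIV M') = sets (PiM UNIV (\<lambda>_::nat. borel :: (real^'q) measure))"
    unfolding M'_def by (intro sets_PiM_cong) (auto simp: gauss_sets)
  define F where "F k y = (\<Prod>j\<in>UNIV. normal_density ((C *v x k) $ j) \<sigma> (y $ j))" for k and y :: "real^'q"
  define G where "G k y = (\<Prod>j\<in>UNIV. normal_density ((C *v x' k) $ j) \<sigma> (y $ j))" for k and y :: "real^'q"
  define \<eta> where "\<eta> k = (norm (C *v x k - C *v x' k))\<^sup>2 / (2 * \<sigma>\<^sup>2)" for k
  have gp: "gpair lborel (F k) (G k) (\<eta> k)" for k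
    unfolding F_def G_def \<eta>_def by (rule gpair_gauss[OF s0])
  have MF: "M k = density lborel (F k)" for k unfolding M_def F_def using s0 by (simp add: gauss_dens)
  have MG: "M' k = density lborel (G k)" for k unfolding M'_def G_def using s0 by (simp add: gauss_dens)
  have sumb: "(\<Sum>k\<in>J. (norm (x k - x' k))\<^sup>2) \<le> b\<^sup>2" if J: "finite J" for J
  proof -
    have sm: "summable (\<lambda>k. (norm (x k - x' k))\<^sup>2)" and sq: "sqrt (\<Sum>k. (norm (x k - x' k))\<^sup>2) \<le> b"
      using adj by (auto simp: Adj_traj_def)
    have nn: "0 \<le> (\<Sum>k. (norm (x k - x' k))\<^sup>2)" by (rule suminf_nonneg[OF sm]) simp
    have "(\<Sum>k\<in>J. (norm (x k - x' k))\<^sup>2) \<le> (\<Sum>k. (norm (x k - x' k))\<^sup>2)"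
      using sm J by (intro sum_le_suminf) auto
    also have "\<dots> = (sqrt (\<Sum>k. (norm (x k - x' k))\<^sup>2))\<^sup>2"
      using nn by (rule real_sqrt_pow2[symmetric])
    also have "\<dots> \<le> b\<^sup>2" using sq nn by (intro power_mono) auto
    finally show ?thesis .
  qed
  have fin: "measure (PiM J M) X \<le> exp \<epsilon> * measure (PiM J M') X + \<delta>"
    if J: "finite J" and X: "X \<in> sets (PiM J M)" for J X
  proof -
    have gprod: "gpair (PiM J (\<lambda>_. lborel)) (\<lambda>z. \<Prod>k\<in>J. F k (z k)) (\<lambda>z. \<Prod>k\<in>J. G k (z k)) (\<Sum>k\<in>J. \<eta> k)"
      by (rule gpair_prod[OF ps_lborel' J gp])
    note gpd = gp[unfolded gpair_def]
    have PF: "PiM J M = density (PiM J (\<lambda>_. lborel)) (\<lambda>z. \<Prod>k\<in>J. F k (z k))"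
      unfolding MF using gpd by (intro PiM_density[OF ps_lborel' J]) (auto simp: less_imp_le)
    have PG: "PiM J M' = density (PiM J (\<lambda>_. lborel)) (\<lambda>z. \<Prod>k\<in>J. G k (z k))"
      unfolding MG using gpd by (intro PiM_density[OF ps_lborel' J]) (auto simp: less_imp_le)
    have X': "X \<in> sets (PiM J (\<lambda>_. lborel))" using X unfolding PF by simp
    have cond: "sqrt (2 * (\<Sum>k\<in>J. \<eta> k)) \<le> 1 / kappa \<delta> \<epsilon>"
    proof -
      have trm: "(norm (C *v x k - C *v x' k))\<^sup>2 \<le> (s1 C)\<^sup>2 * (norm (x k - x' k))\<^sup>2" for k
      proof -
        have "norm (C *v x k - C *v x' k) = norm (C *v (x k - x' k))"
          by (simp add: matrix_vector_mult_diff_distrib)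
        also have "\<dots> \<le> s1 C * norm (x k - x' k)" by (rule s1_bound)
        finally have "(norm (C *v x k - C *v x' k))\<^sup>2 \<le> (s1 C * norm (x k - x' k))\<^sup>2"
          by (intro power_mono) auto
        then show ?thesis by (simp add: power_mult_distrib)
      qed
      have "2 * (\<Sum>k\<in>J. \<eta> k) = (\<Sum>k\<in>J. (norm (C *v x k - C *v x' k))\<^sup>2) / \<sigma>\<^sup>2"
        unfolding \<eta>_def by (simp add: sum_divide_distrib sum_distrib_left)
      also have "\<dots> \<le> (\<Sum>k\<in>J. (s1 C)\<^sup>2 * (norm (x k - x' k))\<^sup>2) / \<sigma>\<^sup>2"
        using s0 trm by (intro divide_right_mono sum_mono) auto
      also have "\<dots> = (s1 C)\<^sup>2 * (\<Sum>k\<in>J. (norm (x k - x' k))\<^sup>2) / \<sigma>\<^sup>2"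
        by (simp add: sum_distrib_left)
      also have "\<dots> \<le> (s1 C)\<^sup>2 * b\<^sup>2 / \<sigma>\<^sup>2"
        using sumb[OF J] s0 by (intro divide_right_mono mult_left_mono) auto
      also have "\<dots> = (s1 C * b / \<sigma>)\<^sup>2" by (simp add: power_mult_distrib power_divide)
      finally have "sqrt (2 * (\<Sum>k\<in>J. \<eta> k)) \<le> sqrt ((s1 C * b / \<sigma>)\<^sup>2)" by (rule real_sqrt_le_mono)
      also have "\<dots> = s1 C * b / \<sigma>" using s1p b s0 by simp
      also have "\<dots> \<le> 1 / kappa \<delta> \<epsilon>" using s s0 k0 b s1p by (simp add: field_simps)
      finally show ?thesis .
    qed
    show ?thesis unfolding PF PG by (rule gpair_dp[OF gprod e d(1) d(2) cond X'])
  qed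
  show ?thesis
  proof (intro conjI ballI)
    show "prob_space (traj_mech C \<sigma> x)" unfolding tm using pM by (intro prob_space_PiM) auto
    show "prob_space (traj_mech C \<sigma> x')" unfolding tm using pM' by (intro prob_space_PiM) auto
    show "sets (traj_mech C \<sigma> x) = sets (PiM UNIV (\<lambda>_::nat. borel :: (real^'q) measure))" unfolding tm by (rule sets1)
    show "sets (traj_mech C \<sigma> x') = sets (PiM UNIV (\<lambda>_::nat. borel :: (real^'q) measure))" unfolding tm by (rule sets2)
    fix S assume S: "S \<in> sets (PiM UNIV (\<lambda>_::nat. borel :: (real^'q) measure))"
    show "measure (traj_mech C \<sigma> x) S \<le> exp \<epsilon> * measure (traj_mech C \<sigma> x') S + \<delta>"
      unfolding tm using S sets1 by (intro dp_extend[OF pM pM' sMM fin]) auto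
  qed
qed

theorem theorem1:
  fixes C :: "real^'n^'q"
    and \<epsilon> \<delta> \<epsilon>' \<delta>' b \<beta> \<sigma> \<sigma>' :: real
  assumes "\<epsilon> > 0" "0 < \<delta>" "\<delta> < 1/2"
    and "\<epsilon>' > 0" "0 < \<delta>'" "\<delta>' < 1/2"
    and "b > 0" "\<beta> > 0"
    and "\<sigma> \<ge> kappa \<delta> \<epsilon> * s1 C * b"
    and "\<sigma>' \<ge> kappa \<delta>' \<epsilon>' * \<beta>"
  shows "diff_private (Adj_traj b) (traj_mech C \<sigma>) \<epsilon> \<delta>
    \<and> (\<forall>(N :: 'c measure) K. K \<in> measurable (PiM UNIV (\<lambda>_::nat. borel)) (subprob_algebra N) \<longrightarrow>
          diff_private (Adj_traj b) (\<lambda>x. traj_mech C \<sigma> x \<bind> K) \<epsilon> \<delta>)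
    \<and> diff_private (Adj_static \<beta>) (ref_mech \<sigma>') \<epsilon>' \<delta>'
    \<and> (\<forall>(N :: 'd measure) K. K \<in> measurable (borel :: (real^'n) measure) (subprob_algebra N) \<longrightarrow>
          diff_private (Adj_static \<beta>) (\<lambda>r. ref_mech \<sigma>' r \<bind> K) \<epsilon>' \<delta>')"
proof -
  note a = assms
  have d1: "\<delta> < 1" "\<delta>' < 1" using a by simp_all
  have k0: "kappa \<delta>' \<epsilon>' > 0" using kappa_props[OF a(4)] by simp
  have base_static: "prob_space (ref_mech \<sigma>' r) \<and> prob_space (ref_mech \<sigma>' r') \<and>
     sets (ref_mech \<sigma>' r) = sets (borel :: (real^'n) measure) \<and> sets (ref_mech \<sigma>' r') = sets (borel :: (real^'n) measure) \<and>
     (\<forall>S\<in>sets borel. measure (ref_mech \<sigma>' r) S \<le> exp \<epsilon>' * measure (ref_mech \<sigma>' r') S + \<delta>')"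
    if "Adj_static \<beta> r r'" for r r' :: "real^'n"
    using static_part[OF a(4) a(5) d1(2) a(8) a(10) that] .
  have st1: "diff_private (Adj_static \<beta>) (ref_mech \<sigma>') \<epsilon>' \<delta>'"
    unfolding diff_private_def
  proof (intro allI impI ballI)
    fix r r' S assume adj: "Adj_static \<beta> r r'" and S: "S \<in> sets (ref_mech \<sigma>' r)"
    note bs = static_part[OF a(4) a(5) d1(2) a(8) a(10) adj]
    have "S \<in> sets borel" using S bs by simp
    then show "measure (ref_mech \<sigma>' r) S \<le> exp \<epsilon>' * measure (ref_mech \<sigma>' r') S + \<delta>'"
      using bs by blast
  qed
  have st2: "\<forall>(N :: 'd measure) K. K \<in> measurable (borel :: (real^'n) measure) (subprob_algebra N) \<longrightarrow>
          diff_private (Adj_static \<beta>) (\<lambda>r. ref_mech \<sigma>' r \<bind> K) \<epsilon>' \<delta>'"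
    using base_static by (intro allI impI dp_post) auto
  have tr: "diff_private (Adj_traj b) (traj_mech C \<sigma>) \<epsilon> \<delta>
    \<and> (\<forall>(N :: 'c measure) K. K \<in> measurable (PiM UNIV (\<lambda>_::nat. borel)) (subprob_algebra N) \<longrightarrow>
          diff_private (Adj_traj b) (\<lambda>x. traj_mech C \<sigma> x \<bind> K) \<epsilon> \<delta>)"
  proof (cases "s1 C > 0")
    case True
    have base: "prob_space (traj_mech C \<sigma> x) \<and> prob_space (traj_mech C \<sigma> x') \<and>
       sets (traj_mech C \<sigma> x) = sets (PiM UNIV (\<lambda>_::nat. borel :: (real^'q) measure)) \<and>
       sets (traj_mech C \<sigma> x') = sets (PiM UNIV (\<lambda>_::nat. borel :: (real^'q) measure)) \<and>
       (\<forall>S\<in>sets (PiM UNIV (\<lambda>_::nat. borel :: (real^'q) measure)).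
          measure (traj_mech C \<sigma> x) S \<le> exp \<epsilon> * measure (traj_mech C \<sigma> x') S + \<delta>)"
      if "Adj_traj b x x'" for x x'
      using traj_part[OF a(1) a(2) d1(1) a(7) a(9) True that] .
    show ?thesis
    proof
      show "diff_private (Adj_traj b) (traj_mech C \<sigma>) \<epsilon> \<delta>"
        unfolding diff_private_def using base by auto
      show "\<forall>(N :: 'c measure) K. K \<in> measurable (PiM UNIV (\<lambda>_::nat. borel)) (subprob_algebra N) \<longrightarrow>
          diff_private (Adj_traj b) (\<lambda>x. traj_mech C \<sigma> x \<bind> K) \<epsilon> \<delta>"
        using base by (intro allI impI dp_post) auto
    qed
  next
    case False
    have Cz: "C *v v = 0" for v
    proof -
      have "norm (C *v v) \<le> s1 C * norm v" by (rule s1_bound)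
      also have "\<dots> \<le> 0" using False by (simp add: mult_nonpos_nonneg)
      finally show ?thesis by simp
    qed
    have eq: "traj_mech C \<sigma> x = traj_mech C \<sigma> x'" for x x'
      unfolding traj_mech_def Cz ..
    have e0: "\<epsilon> \<ge> 0" "\<delta> \<ge> 0" using a by auto
    show ?thesis
      unfolding diff_private_def using eq dp_triv[OF e0] by metis
  qed
  show ?thesis using tr st1 st2 by blast
qed


end
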